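(* Let $S$ be the antipode of the connected graded Hopf algebra $C(q)$. Then $S=\bigoplus_{n\ge0}(-1)^n\mathcal{D}_n$ as graded linear endomorphisms of $C(q)$; equivalently $\mathcal{D}_n=(-1)^nS|_{C_n(q)}$ for all $n\ge0$.
   Context: Let $q$ be a prime power, $C_n(q)$ the complex functions on $\mathfrak{gl}_n(\mathbb{F}_q)$ invariant under $\mathrm{GL}_n(\mathbb{F}_q)$-conjugation ($C_0(q)=\mathbb{C}$), and $C(q)=\bigoplus_n C_n(q)$ the connected graded (commutative, co-commutative) Hopf algebra over $\mathbb{C}$ with multiplication on $C_k(q)\otimes C_l(q)$ given by Harish-Chandra induction $R^{k+l}_{k,l}$ from the block-diagonal Levi $\mathfrak{gl}_k\times\mathfrak{gl}_l$, co-multiplication on $C_n(q)$ given by $\sum_{k+l=n}{}^*R^n_{k,l}$, unit the inclusion of $C_0(q)$ and co-unit the projection onto $C_0(q)$ (identifying $C(\mathfrak{gl}_k(\mathbb{F}_q)\times\mathfrak{gl}_l(\mathbb{F}_q))\cong C_k(q)\otimes C_l(q)$). Harish-Chandra restriction and induction for a standard parabolic $P=L\ltimes U_P$ of $\mathrm{GL}_n$ with Lie algebras $\mathcal{P},\mathcal{L},\mathcal{U}_P$: ${}^*R^{\mathcal{G}_n}_{\mathcal{L}}(f)(x)=\frac{1}{|U_P^F|}\sum_{y\in\mathcal{U}_P^F}f(x+y)$, $R^{\mathcal{G}_n}_{\mathcal{L}}(f)(x)=\frac{1}{|P^F|}\sum_{g\in\mathrm{GL}_n(\mathbb{F}_q),\,gxg^{-1}\in\mathcal{P}^F}f(\pi_{\mathcal{L}}(gxg^{-1}))$.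 The duality operation $\mathcal{D}_n$ on $C_n(q)$ is $\mathcal{D}_n(f)=\sum_{P}(-1)^{r(P)}R^{\mathcal{G}_n}_{\mathcal{L}_P}\circ{}^*R^{\mathcal{G}_n}_{\mathcal{L}_P}(f)$, the sum over the $F$-stable parabolic subgroups $P$ containing a fixed $F$-stable Borel subgroup (e.g. the standard block upper triangular parabolics, indexed by compositions $(\lambda_1,\dots,\lambda_k)$ of $n$), $\mathcal{L}_P$ the Lie algebra of an $F$-stable Levi subgroup of $P$, and $r(P)$ the semisimple $\mathbb{F}_q$-rank of $P$ (equal to $n-k$ for the composition $(\lambda_1,\ldots,\lambda_k)$); this is independent of choices; $\mathcal{D}_0=\mathrm{id}_{\mathbb{C}}$. *)

theory Defs
  imports Complex_Main "Jordan_Normal_Form.Gauss_Jordan_Elimination"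
begin

text \<open>Throughout, 'k is a finite field F_q (q = CARD('k) is then a prime power);
  n x n matrices over 'k (elements of gl_n(F_q)) are 'k mat in carrier_mat n n.
  Complex functions on gl_n are represented as functions 'k mat => complex that
  vanish off carrier_mat n n.\<close>

definition GLn :: "nat \<Rightarrow> 'k::{finite,field} mat set" where
  "GLn n = {g \<in> carrier_mat n n. invertible_mat g}"

definition conjm :: "'k::{finite,field} mat \<Rightarrow> 'k mat \<Rightarrow> 'k mat" where
  "conjm g x = g * x * the (mat_inverse g)"

definition classfun :: "nat \<Rightarrow> ('k::{finite,field} mat \<Rightarrow> complex) set" where
  "classfun n = {f. (\<forall>x. x \<notin> carrier_mat n n \<longrightarrow> f x = 0) \<and>
                    (\<forall>x\<in>carrier_mat n n. \<forall>g\<in>GLn n. f (conjm g x) = f x)}"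

definition compositions :: "nat \<Rightarrow> nat list set" where
  "compositions n = {lam. (\<forall>a\<in>set lam. 0 < a) \<and> sum_list lam = n}"

definition blk :: "nat list \<Rightarrow> nat \<Rightarrow> nat" where
  "blk lam i = card {j. j < length lam \<and> sum_list (take (Suc j) lam) \<le> i}"

definition parLie :: "nat list \<Rightarrow> 'k::{finite,field} mat set" where
  "parLie lam = {M \<in> carrier_mat (sum_list lam) (sum_list lam).
      \<forall>i<sum_list lam. \<forall>j<sum_list lam. blk lam j < blk lam i \<longrightarrow> M $$ (i,j) = 0}"

definition nilLie :: "nat list \<Rightarrow> 'k::{finite,field} mat set" where
  "nilLie lam = {M \<in> carrier_mat (sum_list lam) (sum_list lam).
      \<forall>i<sum_list lam. \<forall>j<sum_list lam. blk lam j \<le> blk lam i \<longrightarrow> M $$ (i,j) = 0}"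

definition parGrp :: "nat list \<Rightarrow> 'k::{finite,field} mat set" where
  "parGrp lam = {g \<in> parLie lam. invertible_mat g}"

definition uniGrp :: "nat list \<Rightarrow> 'k::{finite,field} mat set" where
  "uniGrp lam = {g \<in> carrier_mat (sum_list lam) (sum_list lam).
      \<forall>i<sum_list lam. \<forall>j<sum_list lam. blk lam j \<le> blk lam i \<longrightarrow>
         g $$ (i,j) = (if i = j then 1 else 0)}"

definition levProj :: "nat list \<Rightarrow> 'k::{finite,field} mat \<Rightarrow> 'k mat" where
  "levProj lam M = mat (sum_list lam) (sum_list lam)
      (\<lambda>(i,j). if blk lam i = blk lam j then M $$ (i,j) else 0)"

text \<open>Harish-Chandra restriction and induction for the standard parabolic of
  composition lam; functions on the Levi Lie algebra are functions on
  block-diagonal matrices.\<close>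
definition HC_res :: "nat list \<Rightarrow> ('k::{finite,field} mat \<Rightarrow> complex) \<Rightarrow> 'k mat \<Rightarrow> complex" where
  "HC_res lam f x = (if x \<in> carrier_mat (sum_list lam) (sum_list lam)
      then (1 / of_nat (card (uniGrp lam :: 'k mat set))) * (\<Sum>y\<in>nilLie lam. f (x + y))
      else 0)"

definition HC_ind :: "nat list \<Rightarrow> ('k::{finite,field} mat \<Rightarrow> complex) \<Rightarrow> 'k mat \<Rightarrow> complex" where
  "HC_ind lam h x = (if x \<in> carrier_mat (sum_list lam) (sum_list lam)
      then (1 / of_nat (card (parGrp lam :: 'k mat set))) *
        (\<Sum>g\<in>{g \<in> GLn (sum_list lam). conjm g x \<in> parLie lam}. h (levProj lam (conjm g x)))
      else 0)"

definition duality :: "nat \<Rightarrow> ('k::{finite,field} mat \<Rightarrow> complex) \<Rightarrow> 'k mat \<Rightarrow> complex" where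
  "duality n f = (\<lambda>x. \<Sum>lam\<in>compositions n.
      (-1) ^ (n - length lam) * HC_ind lam (HC_res lam f) x)"

text \<open>Hopf structure. An element of C_k(q) (x) C_l(q) = C(gl_k x gl_l) is a
  function F x y of a k x k matrix x and an l x l matrix y.\<close>
definition coprod :: "nat \<Rightarrow> nat \<Rightarrow> ('k::{finite,field} mat \<Rightarrow> complex) \<Rightarrow> 'k mat \<Rightarrow> 'k mat \<Rightarrow> complex" where
  "coprod k l f x y = (if x \<in> carrier_mat k k \<and> y \<in> carrier_mat l l
      then HC_res [k, l] f (four_block_mat x (0\<^sub>m k l) (0\<^sub>m l k) y) else 0)"

definition hprod :: "nat \<Rightarrow> nat \<Rightarrow> ('k::{finite,field} mat \<Rightarrow> 'k mat \<Rightarrow> complex) \<Rightarrow> 'k mat \<Rightarrow> complex" where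
  "hprod k l F x = (if x \<in> carrier_mat (k + l) (k + l)
      then (1 / of_nat (card (parGrp [k, l] :: 'k mat set))) *
        (\<Sum>g\<in>{g \<in> GLn (k + l). conjm g x \<in> parLie [k, l]}.
           F (mat k k (\<lambda>(i,j). conjm g x $$ (i, j)))
             (mat l l (\<lambda>(i,j). conjm g x $$ (k + i, k + j))))
      else 0)"

text \<open>Antipode of the connected graded Hopf algebra C(q): a graded linear
  endomorphism S (S n acts on C_n(q)) with m o (S (x) id) o Delta = eta o eps =
  m o (id (x) S) o Delta. On C_n, eta o eps is the identity for n = 0 and 0 otherwise.\<close>
definition is_antipode :: "(nat \<Rightarrow> ('k::{finite,field} mat \<Rightarrow> complex) \<Rightarrow> 'k mat \<Rightarrow> complex) \<Rightarrow> bool" where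
  "is_antipode S \<longleftrightarrow>
     (\<forall>n. \<forall>f\<in>classfun n. S n f \<in> classfun n) \<and>
     (\<forall>n. \<forall>f\<in>classfun n. \<forall>g\<in>classfun n. \<forall>a b.
        S n (\<lambda>x. a * f x + b * g x) = (\<lambda>x. a * S n f x + b * S n g x)) \<and>
     (\<forall>n. \<forall>f\<in>classfun n.
        (\<lambda>z. \<Sum>k\<in>{0..n}. hprod k (n - k) (\<lambda>x y. S k (\<lambda>x'. coprod k (n - k) f x' y) x) z)
          = (if n = 0 then f else (\<lambda>x. 0))) \<and>
     (\<forall>n. \<forall>f\<in>classfun n.
        (\<lambda>z. \<Sum>k\<in>{0..n}. hprod k (n - k) (\<lambda>x y. S (n - k) (\<lambda>y'. coprod k (n - k) f x y') y) z)
          = (if n = 0 then f else (\<lambda>x. 0)))"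

end

theory Submission
  imports Defs "Jordan_Normal_Form.Determinant"
begin


lemma finite_carrier_mat: "finite (carrier_mat n m :: 'k::finite mat set)"
proof -
  have "carrier_mat n m \<subseteq> (\<lambda>f. mat n m f) ` (({0..<n}\<times>{0..<m}) \<rightarrow>\<^sub>E (UNIV::'k set))"
  proof
    fix M :: "'k mat" assume M: "M \<in> carrier_mat n m"
    let ?f = "restrict (\<lambda>ij. M $$ ij) ({0..<n}\<times>{0..<m})"
    have "M = mat n m ?f" using M by (intro eq_matI) auto
    moreover have "?f \<in> ({0..<n}\<times>{0..<m}) \<rightarrow>\<^sub>E UNIV" by auto
    ultimately show "M \<in> (\<lambda>f. mat n m f) ` (({0..<n}\<times>{0..<m}) \<rightarrow>\<^sub>E UNIV)" by blast
  qed
  moreover have "finite (({0..<n}\<times>{0..<m}) \<rightarrow>\<^sub>E (UNIV::'k set))"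
    by (intro finite_PiE) auto
  ultimately show ?thesis by (meson finite_surj)
qed

abbreviation ginv :: "'k::{finite,field} mat \<Rightarrow> 'k mat" where "ginv g \<equiv> the (mat_inverse g)"

lemma GLn_iff: "g \<in> GLn n \<longleftrightarrow> g \<in> carrier_mat n n \<and> (\<exists>B\<in>carrier_mat n n. g * B = 1\<^sub>m n \<and> B * g = 1\<^sub>m n)"
proof
  assume "g \<in> GLn n"
  then have g: "g \<in> carrier_mat n n" and "invertible_mat g" by (auto simp: GLn_def)
  then obtain B where i1: "inverts_mat g B" and i2: "inverts_mat B g" unfolding invertible_mat_def by blast
  have gr: "dim_row g = n" "dim_col g = n" using g by auto
  have 1: "g * B = 1\<^sub>m n" using i1 gr unfolding inverts_mat_def by simp
  have 2: "B * g = 1\<^sub>m (dim_row B)" using i2 unfolding inverts_mat_def by simp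
  have c: "dim_col B = n" using arg_cong[OF 1, of dim_col] by simp
  have r0: "dim_col (B * g) = dim_row B" unfolding 2 by simp
  have r: "dim_row B = n" using r0 gr by simp
  have "B \<in> carrier_mat n n" using c r by (intro carrier_matI)
  then show "g \<in> carrier_mat n n \<and> (\<exists>B\<in>carrier_mat n n. g * B = 1\<^sub>m n \<and> B * g = 1\<^sub>m n)"
    using g 1 2 r by blast
next
  assume a: "g \<in> carrier_mat n n \<and> (\<exists>B\<in>carrier_mat n n. g * B = 1\<^sub>m n \<and> B * g = 1\<^sub>m n)"
  then obtain B where g: "g \<in> carrier_mat n n" and B: "B \<in> carrier_mat n n" "g * B = 1\<^sub>m n" "B * g = 1\<^sub>m n" by blast
  have "inverts_mat g B" "inverts_mat B g" unfolding inverts_mat_def using g B by auto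
  moreover have "square_mat g" using g by auto
  ultimately show "g \<in> GLn n" unfolding GLn_def invertible_mat_def using g by blast
qed

lemma GLn_Units: "g \<in> GLn n \<longleftrightarrow> g \<in> Units (ring_mat TYPE('k::{finite,field}) n ())"
  unfolding GLn_iff Units_def ring_mat_simps by auto

lemma GLn_det: "(g::'k::{finite,field} mat) \<in> GLn n \<longleftrightarrow> g \<in> carrier_mat n n \<and> det g \<noteq> 0"
  using unit_imp_det_non_zero[of g n "()"] det_non_zero_imp_unit[of g n "()"] GLn_Units[of g n]
  by (auto simp: GLn_def)

lemma ginv: assumes "(g::'k::{finite,field} mat) \<in> GLn n"
  shows "ginv g \<in> carrier_mat n n" "g * ginv g = 1\<^sub>m n" "ginv g * g = 1\<^sub>m n"
proof -
  have g: "g \<in> carrier_mat n n" using assms by (auto simp: GLn_def)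
  have u: "g \<in> Units (ring_mat TYPE('k) n ())" using assms GLn_Units by blast
  obtain B where B: "mat_inverse g = Some B"
    using mat_inverse(1)[OF g, of "()"] u by (cases "mat_inverse g") auto
  from mat_inverse(2)[OF g B]
  show "ginv g \<in> carrier_mat n n" "g * ginv g = 1\<^sub>m n" "ginv g * g = 1\<^sub>m n" using B by auto
qed

lemma ginv_unique: assumes "(g::'k::{finite,field} mat) \<in> GLn n" "B \<in> carrier_mat n n" "g * B = 1\<^sub>m n"
  shows "ginv g = B"
proof -
  have g: "g \<in> carrier_mat n n" using assms by (auto simp: GLn_def)
  have "ginv g = ginv g * (g * B)" unfolding assms(3) using right_mult_one_mat[OF ginv(1)[OF assms(1)]] by simp
  also have "\<dots> = (ginv g * g) * B" by (rule assoc_mult_mat[OF ginv(1)[OF assms(1)] g assms(2), symmetric])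
  also have "\<dots> = B" unfolding ginv(3)[OF assms(1)] using left_mult_one_mat[OF assms(2)] by simp
  finally show ?thesis .
qed

lemma GLn_carrier: "g \<in> GLn n \<Longrightarrow> g \<in> carrier_mat n n" by (auto simp: GLn_def)

lemma GLn_one: "1\<^sub>m n \<in> GLn n"
  unfolding GLn_iff by (intro conjI bexI[of _ "1\<^sub>m n"]) auto

lemma GLn_ginv: "(g::'k::{finite,field} mat) \<in> GLn n \<Longrightarrow> ginv g \<in> GLn n"
  unfolding GLn_iff[of "ginv g"] using ginv[of g n] GLn_carrier[of g n] by blast

lemma assoc4: assumes "A \<in> carrier_mat n n" "B \<in> carrier_mat n n" "C \<in> carrier_mat n n" "D \<in> carrier_mat n n"
  shows "A * B * (C * D) = A * (B * C) * D"
proof -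
  have "A * B * (C * D) = A * B * C * D" using assms by (intro assoc_mult_mat[symmetric]) auto
  also have "A * B * C = A * (B * C)" using assms by (intro assoc_mult_mat) auto
  finally show ?thesis .
qed

lemma GLn_mult: assumes "(g::'k::{finite,field} mat) \<in> GLn n" "h \<in> GLn n" shows "g * h \<in> GLn n"
proof -
  note G = GLn_carrier[OF assms(1)] GLn_carrier[OF assms(2)] ginv[OF assms(1)] ginv[OF assms(2)]
  have "g * h * (ginv h * ginv g) = g * (h * ginv h) * ginv g" using G by (intro assoc4) auto
  also have "\<dots> = 1\<^sub>m n" unfolding G(4) using G by simp
  finally have 1: "g * h * (ginv h * ginv g) = 1\<^sub>m n" .
  have "ginv h * ginv g * (g * h) = ginv h * (ginv g * g) * h" using G by (intro assoc4) auto
  also have "\<dots> = 1\<^sub>m n" unfolding G(5) using G by simp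
  finally have 2: "ginv h * ginv g * (g * h) = 1\<^sub>m n" .
  have c: "ginv h * ginv g \<in> carrier_mat n n" using G by simp
  show ?thesis unfolding GLn_iff using 1 2 c G(1,2) by (intro conjI bexI[of _ "ginv h * ginv g"]) auto
qed

lemma ginv_mult: assumes "(g::'k::{finite,field} mat) \<in> GLn n" "h \<in> GLn n" shows "ginv (g * h) = ginv h * ginv g"
proof -
  note G = GLn_carrier[OF assms(1)] GLn_carrier[OF assms(2)] ginv[OF assms(1)] ginv[OF assms(2)]
  have "g * h * (ginv h * ginv g) = g * (h * ginv h) * ginv g" using G by (intro assoc4) auto
  also have "\<dots> = 1\<^sub>m n" unfolding G(4) using G by simp
  finally have 1: "g * h * (ginv h * ginv g) = 1\<^sub>m n" .
  have c: "ginv h * ginv g \<in> carrier_mat n n" using G by simp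
  show ?thesis by (rule ginv_unique[OF GLn_mult[OF assms] c 1])
qed

lemma ginv_ginv: "(g::'k::{finite,field} mat) \<in> GLn n \<Longrightarrow> ginv (ginv g) = g"
  using ginv_unique[OF GLn_ginv, of g n g] ginv[of g n] GLn_carrier by blast

lemma ginv_one: "ginv (1\<^sub>m n :: 'k::{finite,field} mat) = 1\<^sub>m n"
  using ginv_unique[OF GLn_one, of "1\<^sub>m n" n] by simp

lemma conjm_carrier: "(g::'k::{finite,field} mat) \<in> GLn n \<Longrightarrow> conjm g x \<in> carrier_mat n n"
  unfolding conjm_def using ginv[of g n] GLn_carrier[of g n] by auto

lemma conjm_mult: assumes "(g::'k::{finite,field} mat) \<in> GLn n" "h \<in> GLn n" "x \<in> carrier_mat n n"
  shows "conjm (g * h) x = conjm g (conjm h x)"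
  unfolding conjm_def ginv_mult[OF assms(1,2)]
  using GLn_carrier[OF assms(1)] GLn_carrier[OF assms(2)] ginv[OF assms(1)] ginv[OF assms(2)] assms(3)
  by (simp add: assoc_mult_mat[of _ n n _ n _ n])

lemma conjm_one: "x \<in> carrier_mat n n \<Longrightarrow> conjm (1\<^sub>m n :: 'k::{finite,field} mat) x = x"
  unfolding conjm_def ginv_one by simp

lemma conjm_ginv: assumes "(g::'k::{finite,field} mat) \<in> GLn n" "x \<in> carrier_mat n n"
  shows "conjm (ginv g) (conjm g x) = x" "conjm g (conjm (ginv g) x) = x"
proof -
  show "conjm (ginv g) (conjm g x) = x"
    using conjm_mult[OF GLn_ginv[OF assms(1)] assms(1) assms(2), symmetric] ginv[OF assms(1)] conjm_one[OF assms(2)]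
    by simp
  show "conjm g (conjm (ginv g) x) = x"
    using conjm_mult[OF assms(1) GLn_ginv[OF assms(1)] assms(2), symmetric] ginv[OF assms(1)] conjm_one[OF assms(2)]
    by simp
qed

lemma conjm_add: assumes "(g::'k::{finite,field} mat) \<in> GLn n" "x \<in> carrier_mat n n" "y \<in> carrier_mat n n"
  shows "conjm g (x + y) = conjm g x + conjm g y"
proof -
  note G = GLn_carrier[OF assms(1)] ginv[OF assms(1)]
  have "g * (x + y) = g * x + g * y" using G assms by (intro mult_add_distrib_mat) auto
  moreover have "(g * x + g * y) * ginv g = g * x * ginv g + g * y * ginv g"
    using G assms by (intro add_mult_distrib_mat) auto
  ultimately show ?thesis unfolding conjm_def by simp
qed



lemma sum_list_take_le: "sum_list (take m (xs::nat list)) \<le> sum_list xs"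
proof -
  have "sum_list xs = sum_list (take m xs) + sum_list (drop m xs)"
    by (metis append_take_drop_id sum_list_append)
  then show ?thesis by simp
qed

lemma blk_less: assumes "i < sum_list lam" shows "blk lam i < length lam"
proof -
  have ne: "lam \<noteq> []" using assms by auto
  have "{j. j < length lam \<and> sum_list (take (Suc j) lam) \<le> i} \<subseteq> {..<length lam - 1}"
  proof
    fix j assume j: "j \<in> {j. j < length lam \<and> sum_list (take (Suc j) lam) \<le> i}"
    have "j \<noteq> length lam - 1"
    proof
      assume "j = length lam - 1"
      then have "Suc j = length lam" using ne by (cases lam) auto
      then show False using j assms by auto
    qed
    then show "j \<in> {..<length lam - 1}" using j by auto
  qed
  then have "blk lam i \<le> length lam - 1" unfolding blk_def
    by (metis card_lessThan card_mono finite_lessThan)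
  then show ?thesis using ne by (cases lam) auto
qed

lemma blk_single: "i < k \<Longrightarrow> blk [k] i = 0"
  unfolding blk_def by auto

lemma blk_nil: "blk [] i = 0"
  unfolding blk_def by auto

lemma blk_append: "blk (a @ b) i = (if i < sum_list a then blk a i else length a + blk b (i - sum_list a))"
proof (cases "i < sum_list a")
  case True
  have "{j. j < length (a @ b) \<and> sum_list (take (Suc j) (a @ b)) \<le> i}
      = {j. j < length a \<and> sum_list (take (Suc j) a) \<le> i}"
  proof (rule Set.set_eqI, rule iffI)
    fix j assume j: "j \<in> {j. j < length (a @ b) \<and> sum_list (take (Suc j) (a @ b)) \<le> i}"
    have "j < length a"
    proof (rule ccontr)
      assume "\<not> j < length a"
      then have "sum_list a \<le> sum_list (take (Suc j) (a @ b))" by simp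
      then show False using j True by simp
    qed
    then show "j \<in> {j. j < length a \<and> sum_list (take (Suc j) a) \<le> i}" using j by simp
  next
    fix j assume j: "j \<in> {j. j < length a \<and> sum_list (take (Suc j) a) \<le> i}"
    then show "j \<in> {j. j < length (a @ b) \<and> sum_list (take (Suc j) (a @ b)) \<le> i}" by simp
  qed
  then show ?thesis using True unfolding blk_def by simp
next
  case False
  let ?B = "{j. j < length b \<and> sum_list (take (Suc j) b) \<le> i - sum_list a}"
  have "{j. j < length (a @ b) \<and> sum_list (take (Suc j) (a @ b)) \<le> i}
      = {..<length a} \<union> (\<lambda>j. length a + j) ` ?B"
  proof (rule Set.set_eqI, rule iffI)
    fix j assume j: "j \<in> {j. j < length (a @ b) \<and> sum_list (take (Suc j) (a @ b)) \<le> i}"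
    show "j \<in> {..<length a} \<union> (\<lambda>j. length a + j) ` ?B"
    proof (cases "j < length a")
      case True then show ?thesis by simp
    next
      case F: False
      then have "Suc j - length a = Suc (j - length a)" by simp
      then have "sum_list (take (Suc j) (a @ b)) = sum_list a + sum_list (take (Suc (j - length a)) b)"
        using F by simp
      then have "j - length a \<in> ?B" using j F False by auto
      moreover have "j = length a + (j - length a)" using F by simp
      ultimately show ?thesis by blast
    qed
  next
    fix j assume j: "j \<in> {..<length a} \<union> (\<lambda>j. length a + j) ` ?B"
    show "j \<in> {j. j < length (a @ b) \<and> sum_list (take (Suc j) (a @ b)) \<le> i}"
    proof (cases "j < length a")
      case True
      then have "sum_list (take (Suc j) (a @ b)) = sum_list (take (Suc j) a)" by simp
      also have "\<dots> \<le> sum_list a" by (rule sum_list_take_le)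
      finally show ?thesis using True False by simp
    next
      case F: False
      then obtain j' where j': "j = length a + j'" "j' \<in> ?B" using j by auto
      have "Suc j - length a = Suc j'" using j' by simp
      then have "sum_list (take (Suc j) (a @ b)) = sum_list a + sum_list (take (Suc j') b)"
        using F by simp
      then show ?thesis using j' False by auto
    qed
  qed
  moreover have "card ({..<length a} \<union> (\<lambda>j. length a + j) ` ?B) = length a + card ?B"
    by (subst card_Un_disjoint) (auto simp: card_image inj_on_def)
  ultimately show ?thesis using False unfolding blk_def by simp
qed


definition ulb :: "nat \<Rightarrow> 'a mat \<Rightarrow> 'a mat" where "ulb k M = mat k k (\<lambda>(i,j). M $$ (i,j))"
definition lrb :: "nat \<Rightarrow> nat \<Rightarrow> 'a mat \<Rightarrow> 'a mat" where "lrb k l M = mat l l (\<lambda>(i,j). M $$ (k+i,k+j))"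
definition urb :: "nat \<Rightarrow> nat \<Rightarrow> 'a mat \<Rightarrow> 'a mat" where "urb k l M = mat k l (\<lambda>(i,j). M $$ (i,k+j))"
definition llb :: "nat \<Rightarrow> nat \<Rightarrow> 'a mat \<Rightarrow> 'a mat" where "llb k l M = mat l k (\<lambda>(i,j). M $$ (k+i,j))"

lemma blocks_carrier[simp]: "ulb k M \<in> carrier_mat k k" "lrb k l M \<in> carrier_mat l l"
  "urb k l M \<in> carrier_mat k l" "llb k l M \<in> carrier_mat l k"
  unfolding ulb_def lrb_def urb_def llb_def by auto

lemma blocks_dim[simp]: "dim_row (ulb k M) = k" "dim_col (ulb k M) = k"
  "dim_row (lrb k l M) = l" "dim_col (lrb k l M) = l"
  "dim_row (urb k l M) = k" "dim_col (urb k l M) = l"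
  "dim_row (llb k l M) = l" "dim_col (llb k l M) = k"
  unfolding ulb_def lrb_def urb_def llb_def by auto

lemma index_blocks[simp]:
  "i < k \<Longrightarrow> j < k \<Longrightarrow> ulb k M $$ (i,j) = M $$ (i,j)"
  "i < l \<Longrightarrow> j < l \<Longrightarrow> lrb k l M $$ (i,j) = M $$ (k+i,k+j)"
  "i < k \<Longrightarrow> j < l \<Longrightarrow> urb k l M $$ (i,j) = M $$ (i,k+j)"
  "i < l \<Longrightarrow> j < k \<Longrightarrow> llb k l M $$ (i,j) = M $$ (k+i,j)"
  unfolding ulb_def lrb_def urb_def llb_def by auto

lemma block_decomp: assumes "M \<in> carrier_mat (k+l) (k+l)"
  shows "M = four_block_mat (ulb k M) (urb k l M) (llb k l M) (lrb k l M)"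
  by (rule eq_matI) (insert assms, auto)

lemma blocks_fb: assumes "A \<in> carrier_mat k k" "B \<in> carrier_mat k l" "C \<in> carrier_mat l k" "D \<in> carrier_mat l l"
  shows "ulb k (four_block_mat A B C D) = A" "urb k l (four_block_mat A B C D) = B"
    "llb k l (four_block_mat A B C D) = C" "lrb k l (four_block_mat A B C D) = D"
proof -
  show "ulb k (four_block_mat A B C D) = A" by (rule eq_matI) (insert assms, auto)
  show "urb k l (four_block_mat A B C D) = B" by (rule eq_matI) (insert assms, auto)
  show "llb k l (four_block_mat A B C D) = C" by (rule eq_matI) (insert assms, auto)
  show "lrb k l (four_block_mat A B C D) = D" by (rule eq_matI) (insert assms, auto)
qed

definition zset :: "(nat \<Rightarrow> nat \<Rightarrow> bool) \<Rightarrow> nat list \<Rightarrow> 'a::zero mat set" where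
  "zset R lam = {M \<in> carrier_mat (sum_list lam) (sum_list lam).
      \<forall>i<sum_list lam. \<forall>j<sum_list lam. R (blk lam j) (blk lam i) \<longrightarrow> M $$ (i,j) = 0}"

lemma parLie_zset: "parLie lam = zset (<) lam" unfolding parLie_def zset_def by simp
lemma nilLie_zset: "nilLie lam = zset (\<le>) lam" unfolding nilLie_def zset_def by simp

lemma zset_append_entries:
  fixes R :: "nat \<Rightarrow> nat \<Rightarrow> bool"
  assumes Rlt: "\<And>a b. a < b \<Longrightarrow> R a b" and Rgt: "\<And>a b. b < a \<Longrightarrow> \<not> R a b"
    and Rsh: "\<And>a b c. R (c + a) (c + b) = R a b"
    and kl: "k = sum_list al" "l = sum_list be"
    and M: "(M::'a::zero mat) \<in> carrier_mat (k+l) (k+l)"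
  shows "M \<in> zset R (al @ be) \<longleftrightarrow>
    ulb k M \<in> zset R al \<and> lrb k l M \<in> zset R be \<and> llb k l M = 0\<^sub>m l k"
proof
  assume Z: "M \<in> zset R (al @ be)"
  have z: "\<And>i j. i < k + l \<Longrightarrow> j < k + l \<Longrightarrow> R (blk (al@be) j) (blk (al@be) i) \<Longrightarrow> M $$ (i,j) = 0"
    using Z kl unfolding zset_def by auto
  have "ulb k M \<in> zset R al"
    unfolding zset_def
  proof (intro CollectI conjI allI impI)
    show "ulb k M \<in> carrier_mat (sum_list al) (sum_list al)" using kl by simp
    fix i j assume ij: "i < sum_list al" "j < sum_list al" "R (blk al j) (blk al i)"
    then show "ulb k M $$ (i,j) = 0" using z[of i j] kl by (simp add: blk_append)
  qed
  moreover have "lrb k l M \<in> zset R be"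
    unfolding zset_def
  proof (intro CollectI conjI allI impI)
    show "lrb k l M \<in> carrier_mat (sum_list be) (sum_list be)" using kl by simp
    fix i j assume ij: "i < sum_list be" "j < sum_list be" "R (blk be j) (blk be i)"
    then show "lrb k l M $$ (i,j) = 0" using z[of "k+i" "k+j"] kl by (simp add: blk_append Rsh)
  qed
  moreover have "llb k l M = 0\<^sub>m l k"
  proof (rule eq_matI)
    fix i j assume ij: "i < dim_row (0\<^sub>m l k :: 'a mat)" "j < dim_col (0\<^sub>m l k :: 'a mat)"
    then have ij': "i < l" "j < k" by auto
    have "blk al j < length al" using blk_less[of j al] ij' kl by simp
    then have "R (blk (al@be) j) (blk (al@be) (k+i))" using ij' kl by (simp add: blk_append Rlt)
    then show "llb k l M $$ (i,j) = 0\<^sub>m l k $$ (i,j)" using z[of "k+i" j] ij' by simp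
  qed auto
  ultimately show "ulb k M \<in> zset R al \<and> lrb k l M \<in> zset R be \<and> llb k l M = 0\<^sub>m l k" by blast
next
  assume A: "ulb k M \<in> zset R al \<and> lrb k l M \<in> zset R be \<and> llb k l M = 0\<^sub>m l k"
  have zu: "\<And>i j. i < k \<Longrightarrow> j < k \<Longrightarrow> R (blk al j) (blk al i) \<Longrightarrow> M $$ (i,j) = 0"
  proof -
    fix i j assume ij: "i < k" "j < k" "R (blk al j) (blk al i)"
    have "ulb k M $$ (i,j) = 0" using A ij kl unfolding zset_def by blast
    then show "M $$ (i,j) = 0" using ij by simp
  qed
  have zl: "\<And>i j. i < l \<Longrightarrow> j < l \<Longrightarrow> R (blk be j) (blk be i) \<Longrightarrow> M $$ (k+i,k+j) = 0"
  proof -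
    fix i j assume ij: "i < l" "j < l" "R (blk be j) (blk be i)"
    have "lrb k l M $$ (i,j) = 0" using A ij kl unfolding zset_def by blast
    then show "M $$ (k+i,k+j) = 0" using ij by simp
  qed
  have zll: "\<And>i j. i < l \<Longrightarrow> j < k \<Longrightarrow> M $$ (k+i,j) = 0"
  proof -
    fix i j assume "i < l" "j < k"
    then have "llb k l M $$ (i,j) = 0\<^sub>m l k $$ (i,j)" using A by simp
    then show "M $$ (k+i,j) = 0" using \<open>i < l\<close> \<open>j < k\<close> by simp
  qed
  show "M \<in> zset R (al @ be)"
    unfolding zset_def
  proof (intro CollectI conjI allI impI)
    show "M \<in> carrier_mat (sum_list (al @ be)) (sum_list (al @ be))" using M kl by simp
    fix i j assume ij0: "i < sum_list (al @ be)" "j < sum_list (al @ be)"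
      and r: "R (blk (al @ be) j) (blk (al @ be) i)"
    have ij: "i < k + l" "j < k + l" using ij0 kl by auto
    show "M $$ (i,j) = 0"
    proof (cases "i < k")
      case True
      note i = True
      show ?thesis
      proof (cases "j < k")
        case True
        then show ?thesis using zu[of i j] i r kl by (simp add: blk_append)
      next
        case False
        have "blk al i < length al" using blk_less[of i al] i kl by simp
        then have "blk (al@be) i < blk (al@be) j" using i False kl by (simp add: blk_append)
        then show ?thesis using Rgt r by blast
      qed
    next
      case False
      note i = False
      show ?thesis
      proof (cases "j < k")
        case True
        then show ?thesis using zll[of "i - k" j] i ij kl by simp
      next
        case False
        have "R (blk be (j - k)) (blk be (i - k))" using r i False kl Rsh by (simp add: blk_append)
        then show ?thesis using zl[of "i - k" "j - k"] i False ij kl by simp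
      qed
    qed
  qed
qed



lemma zset_carrier: "M \<in> zset R lam \<Longrightarrow> M \<in> carrier_mat (sum_list lam) (sum_list lam)"
  unfolding zset_def by auto

lemma finite_zset: "finite (zset R lam :: 'k::{finite,zero} mat set)"
  by (rule finite_subset[OF _ finite_carrier_mat]) (auto simp: zset_def)

lemma zset_append:
  fixes R :: "nat \<Rightarrow> nat \<Rightarrow> bool"
  assumes Rlt: "\<And>a b. a < b \<Longrightarrow> R a b" and Rgt: "\<And>a b. b < a \<Longrightarrow> \<not> R a b"
    and Rsh: "\<And>a b c. R (c + a) (c + b) = R a b"
    and kl: "k = sum_list al" "l = sum_list be"
  shows "(zset R (al @ be) :: 'a::zero mat set) = (\<lambda>(A,D,B). four_block_mat A B (0\<^sub>m l k) D) ` (zset R al \<times> zset R be \<times> carrier_mat k l)"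
proof (rule Set.set_eqI, rule iffI)
  fix M :: "'a mat" assume M: "M \<in> zset R (al @ be)"
  have Mc: "M \<in> carrier_mat (k+l) (k+l)" using zset_carrier[OF M] kl by simp
  note e = zset_append_entries[where R=R, OF Rlt Rgt Rsh kl Mc]
  have "M = four_block_mat (ulb k M) (urb k l M) (0\<^sub>m l k) (lrb k l M)"
    using block_decomp[OF Mc] M e by simp
  then show "M \<in> (\<lambda>(A,D,B). four_block_mat A B (0\<^sub>m l k) D) ` (zset R al \<times> zset R be \<times> carrier_mat k l)"
    using M e by (intro image_eqI[of _ _ "(ulb k M, lrb k l M, urb k l M)"]) auto
next
  fix M :: "'a mat" assume "M \<in> (\<lambda>(A,D,B). four_block_mat A B (0\<^sub>m l k) D) ` (zset R al \<times> zset R be \<times> carrier_mat k l)"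
  then obtain A D B where M: "M = four_block_mat A B (0\<^sub>m l k) D" and A: "A \<in> zset R al"
    and D: "D \<in> zset R be" and B: "B \<in> carrier_mat k l" by auto
  have Ac: "A \<in> carrier_mat k k" using zset_carrier[OF A] kl by simp
  have Dc: "D \<in> carrier_mat l l" using zset_carrier[OF D] kl by simp
  have Mc: "M \<in> carrier_mat (k+l) (k+l)" using M Ac Dc by simp
  note e = zset_append_entries[where R=R, OF Rlt Rgt Rsh kl Mc]
  have "ulb k M \<in> zset R al \<and> lrb k l M \<in> zset R be \<and> llb k l M = 0\<^sub>m l k"
    unfolding M using blocks_fb[OF Ac B zero_carrier_mat Dc] A D by simp
  then show "M \<in> zset R (al @ be)" using e by blast
qed

lemma fb_inj: "inj_on (\<lambda>(A,D,B). four_block_mat A B (0\<^sub>m l k) D) (carrier_mat k k \<times> carrier_mat l l \<times> carrier_mat k l)"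
proof (rule inj_onI)
  fix x y assume x: "x \<in> carrier_mat k k \<times> carrier_mat l l \<times> carrier_mat k l"
    and y: "y \<in> carrier_mat k k \<times> carrier_mat l l \<times> carrier_mat k l"
    and eq: "(\<lambda>(A,D,B). four_block_mat A B (0\<^sub>m l k) D) x = (\<lambda>(A,D,B). four_block_mat A B (0\<^sub>m l k) D) y"
  obtain A D B where xx: "x = (A,D,B)" by (cases x) auto
  obtain A' D' B' where yy: "y = (A',D',B')" by (cases y) auto
  have *: "A \<in> carrier_mat k k" "D \<in> carrier_mat l l" "B \<in> carrier_mat k l"
    "A' \<in> carrier_mat k k" "D' \<in> carrier_mat l l" "B' \<in> carrier_mat k l" using x y xx yy by auto
  have e: "four_block_mat A B (0\<^sub>m l k) D = four_block_mat A' B' (0\<^sub>m l k) D'" using eq xx yy by simp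
  have "A = A'" using blocks_fb(1)[OF *(1,3) zero_carrier_mat *(2)] blocks_fb(1)[OF *(4,6) zero_carrier_mat *(5)] e by metis
  moreover have "B = B'" using blocks_fb(2)[OF *(1,3) zero_carrier_mat *(2)] blocks_fb(2)[OF *(4,6) zero_carrier_mat *(5)] e by metis
  moreover have "D = D'" using blocks_fb(4)[OF *(1,3) zero_carrier_mat *(2)] blocks_fb(4)[OF *(4,6) zero_carrier_mat *(5)] e by metis
  ultimately show "x = y" using xx yy by simp
qed

lemma zset_sub_carrier: "k = sum_list al \<Longrightarrow> zset R al \<subseteq> carrier_mat k k" using zset_carrier by blast

lemma sum_zset_append:
  fixes R :: "nat \<Rightarrow> nat \<Rightarrow> bool" and phi :: "'k::{finite,zero} mat \<Rightarrow> 'b::comm_monoid_add"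
  assumes Rlt: "\<And>a b. a < b \<Longrightarrow> R a b" and Rgt: "\<And>a b. b < a \<Longrightarrow> \<not> R a b"
    and Rsh: "\<And>a b c. R (c + a) (c + b) = R a b"
    and kl: "k = sum_list al" "l = sum_list be"
  shows "(\<Sum>M\<in>zset R (al @ be). phi M) =
    (\<Sum>A\<in>zset R al. \<Sum>D\<in>zset R be. \<Sum>B\<in>carrier_mat k l. phi (four_block_mat A B (0\<^sub>m l k) D))"
    and "card (zset R (al @ be) :: 'k mat set) = card (zset R al :: 'k mat set) * card (zset R be :: 'k mat set) * card (carrier_mat k l :: 'k mat set)"
proof -
  have inj: "inj_on (\<lambda>(A,D,B). four_block_mat A B (0\<^sub>m l k) D) (zset R al \<times> zset R be \<times> carrier_mat k l)"
    by (rule inj_on_subset[OF fb_inj]) (use zset_sub_carrier[OF kl(1)] zset_sub_carrier[OF kl(2)] in auto)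
  have "(\<Sum>M\<in>zset R (al @ be). phi M) = (\<Sum>M\<in>(\<lambda>(A,D,B). four_block_mat A B (0\<^sub>m l k) D) ` (zset R al \<times> zset R be \<times> carrier_mat k l). phi M)"
    using zset_append[where R=R and 'a='k, OF Rlt Rgt Rsh kl] by simp
  also have "\<dots> = (\<Sum>x\<in>zset R al \<times> zset R be \<times> carrier_mat k l. phi ((\<lambda>(A,D,B). four_block_mat A B (0\<^sub>m l k) D) x))"
    by (rule sum.reindex[OF inj, unfolded comp_def])
  also have "\<dots> = (\<Sum>A\<in>zset R al. \<Sum>D\<in>zset R be. \<Sum>B\<in>carrier_mat k l. phi (four_block_mat A B (0\<^sub>m l k) D))"
    by (simp add: sum.cartesian_product finite_zset finite_carrier_mat split_def)
  finally show "(\<Sum>M\<in>zset R (al @ be). phi M) =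
    (\<Sum>A\<in>zset R al. \<Sum>D\<in>zset R be. \<Sum>B\<in>carrier_mat k l. phi (four_block_mat A B (0\<^sub>m l k) D))" .
  show "card (zset R (al @ be) :: 'k mat set) = card (zset R al :: 'k mat set) * card (zset R be :: 'k mat set) * card (carrier_mat k l :: 'k mat set)"
    using zset_append[where R=R and 'a='k, OF Rlt Rgt Rsh kl] card_image[OF inj] by (simp add: card_cartesian_product mult.assoc)
qed


lemma sum_nilLie_append:
  assumes kl: "k = sum_list al" "l = sum_list be"
  shows "(\<Sum>M\<in>nilLie (al @ be). phi M) =
    (\<Sum>A\<in>nilLie al. \<Sum>D\<in>nilLie be. \<Sum>B\<in>carrier_mat k l. phi (four_block_mat A B (0\<^sub>m l k) (D::'k::{finite,field} mat)))"
    and "card (nilLie (al @ be) :: 'k mat set) = card (nilLie al :: 'k mat set) * card (nilLie be :: 'k mat set) * card (carrier_mat k l :: 'k mat set)"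
  unfolding nilLie_zset by (rule sum_zset_append[OF _ _ _ kl]; simp)+

lemma parLie_append:
  assumes kl: "k = sum_list al" "l = sum_list be" and M: "(M::'k::{finite,field} mat) \<in> carrier_mat (k+l) (k+l)"
  shows "M \<in> parLie (al @ be) \<longleftrightarrow> ulb k M \<in> parLie al \<and> lrb k l M \<in> parLie be \<and> llb k l M = 0\<^sub>m l k"
  unfolding parLie_zset by (rule zset_append_entries[OF _ _ _ kl M]; simp)

lemma parLie_carrier: "M \<in> parLie lam \<Longrightarrow> M \<in> carrier_mat (sum_list lam) (sum_list lam)"
  unfolding parLie_def by auto

lemma nilLie_carrier: "M \<in> nilLie lam \<Longrightarrow> M \<in> carrier_mat (sum_list lam) (sum_list lam)"
  unfolding nilLie_def by auto

lemma GLn_fb: assumes "A \<in> carrier_mat k k" "B \<in> carrier_mat k l" "D \<in> carrier_mat l l"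
  shows "four_block_mat A B (0\<^sub>m l k) D \<in> GLn (k+l) \<longleftrightarrow> A \<in> GLn k \<and> (D::'k::{finite,field} mat) \<in> GLn l"
  unfolding GLn_det det_four_block_mat_lower_left_zero[OF assms(1,2) refl assms(3)]
  using assms by auto

lemma parGrp_eq: "parGrp lam = parLie lam \<inter> GLn (sum_list lam)"
  unfolding parGrp_def GLn_def using parLie_carrier by blast

lemma finite_parGrp: "finite (parGrp lam :: 'k::{finite,field} mat set)"
  unfolding parGrp_eq parLie_zset using finite_zset by blast

lemma finite_GLn: "finite (GLn n :: 'k::{finite,field} mat set)"
  by (rule finite_subset[OF _ finite_carrier_mat]) (auto simp: GLn_def)

lemma finite_nilLie: "finite (nilLie lam :: 'k::{finite,field} mat set)"
  unfolding nilLie_zset by (rule finite_zset)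

lemma card_parGrp_append:
  assumes kl: "k = sum_list al" "l = sum_list be"
  shows "card (parGrp (al @ be) :: 'k::{finite,field} mat set) = card (parGrp al :: 'k mat set) * card (parGrp be :: 'k mat set) * card (carrier_mat k l :: 'k mat set)"
proof -
  let ?f = "(\<lambda>(A,D,B). four_block_mat A B (0\<^sub>m l k) D) :: 'k mat \<times> 'k mat \<times> 'k mat \<Rightarrow> 'k mat"
  have eq: "parGrp (al @ be) = ?f ` (parGrp al \<times> parGrp be \<times> carrier_mat k l)"
  proof -
    have z: "parLie (al @ be) = ?f ` (parLie al \<times> parLie be \<times> carrier_mat k l)"
      unfolding parLie_zset by (rule zset_append[OF _ _ _ kl]; simp)
    show ?thesis unfolding parGrp_eq z
    proof (rule Set.set_eqI, rule iffI)
      fix M assume "M \<in> ?f ` (parLie al \<times> parLie be \<times> carrier_mat k l) \<inter> GLn (sum_list (al @ be))"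
      then obtain A D B where M: "M = four_block_mat A B (0\<^sub>m l k) D" "A \<in> zset (<) al" "D \<in> zset (<) be"
        "B \<in> carrier_mat k l" "M \<in> GLn (k+l)" using kl unfolding parLie_zset by auto
      have c: "A \<in> carrier_mat k k" "D \<in> carrier_mat l l" using M zset_carrier kl by blast+
      have "A \<in> GLn k \<and> D \<in> GLn l" using GLn_fb[OF c(1) M(4) c(2)] M by simp
      then show "M \<in> ?f ` ((parLie al \<inter> GLn (sum_list al)) \<times> (parLie be \<inter> GLn (sum_list be)) \<times> carrier_mat k l)"
        using M kl unfolding parLie_zset by (intro image_eqI[of _ _ "(A,D,B)"]) auto
    next
      fix M assume "M \<in> ?f ` ((parLie al \<inter> GLn (sum_list al)) \<times> (parLie be \<inter> GLn (sum_list be)) \<times> carrier_mat k l)"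
      then obtain A D B where M: "M = four_block_mat A B (0\<^sub>m l k) D" "A \<in> zset (<) al" "D \<in> zset (<) be"
        "B \<in> carrier_mat k l" "A \<in> GLn k" "D \<in> GLn l" using kl unfolding parLie_zset by auto
      have c: "A \<in> carrier_mat k k" "D \<in> carrier_mat l l" using M zset_carrier kl by blast+
      have "M \<in> GLn (k+l)" using GLn_fb[OF c(1) M(4) c(2)] M by simp
      then show "M \<in> ?f ` (parLie al \<times> parLie be \<times> carrier_mat k l) \<inter> GLn (sum_list (al @ be))"
        using M kl unfolding parLie_zset by (auto intro!: image_eqI[of _ _ "(A,D,B)"])
    qed
  qed
  have inj: "inj_on ?f (parGrp al \<times> parGrp be \<times> carrier_mat k l)"
    by (rule inj_on_subset[OF fb_inj]) (use parLie_carrier kl in \<open>auto simp: parGrp_def\<close>)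
  show ?thesis unfolding eq card_image[OF inj] by (simp add: card_cartesian_product mult.assoc)
qed

lemma levProj_append:
  assumes kl: "k = sum_list al" "l = sum_list be"
  shows "levProj (al @ be) M = four_block_mat (levProj al (ulb k M)) (0\<^sub>m k l) (0\<^sub>m l k) (levProj be (lrb k l M))"
proof (rule eq_matI)
  fix i j assume ij: "i < dim_row (four_block_mat (levProj al (ulb k M)) (0\<^sub>m k l) (0\<^sub>m l k) (levProj be (lrb k l M)))"
    "j < dim_col (four_block_mat (levProj al (ulb k M)) (0\<^sub>m k l) (0\<^sub>m l k) (levProj be (lrb k l M)))"
  have d: "dim_row (levProj al (ulb k M)) = k" "dim_col (levProj al (ulb k M)) = k"
     "dim_row (levProj be (lrb k l M)) = l" "dim_col (levProj be (lrb k l M)) = l"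
    unfolding levProj_def using kl by auto
  have ij': "i < k + l" "j < k + l" using ij d by auto
  show "levProj (al @ be) M $$ (i, j) = four_block_mat (levProj al (ulb k M)) (0\<^sub>m k l) (0\<^sub>m l k) (levProj be (lrb k l M)) $$ (i, j)"
  proof (cases "i < k"; cases "j < k")
    assume "i < k" "j < k" then show ?thesis using ij' d kl by (simp add: levProj_def blk_append)
  next
    assume a: "i < k" "\<not> j < k"
    have "blk al i < length al" using blk_less[of i al] a kl by simp
    then show ?thesis using a ij' d kl by (simp add: levProj_def blk_append)
  next
    assume a: "\<not> i < k" "j < k"
    have "blk al j < length al" using blk_less[of j al] a kl by simp
    then show ?thesis using a ij' d kl by (simp add: levProj_def blk_append)
  next
    assume a: "\<not> i < k" "\<not> j < k"
    then show ?thesis using a ij' d kl by (simp add: levProj_def blk_append)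
  qed
qed (use kl in \<open>auto simp: levProj_def\<close>)

lemma card_uniGrp: "card (uniGrp lam :: 'k::{finite,field} mat set) = card (nilLie lam :: 'k mat set)"
proof -
  let ?n = "sum_list lam"
  have eq: "(uniGrp lam :: 'k mat set) = (\<lambda>M. M + 1\<^sub>m ?n) ` nilLie lam"
  proof (rule Set.set_eqI, rule iffI)
    fix g :: "'k mat" assume g: "g \<in> uniGrp lam"
    have gc: "g \<in> carrier_mat ?n ?n" using g unfolding uniGrp_def by auto
    have "g - 1\<^sub>m ?n \<in> nilLie lam" using g gc unfolding uniGrp_def nilLie_def by auto
    moreover have "g = (g - 1\<^sub>m ?n) + 1\<^sub>m ?n" using gc by (intro eq_matI) auto
    ultimately show "g \<in> (\<lambda>M. M + 1\<^sub>m ?n) ` nilLie lam" by blast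
  next
    fix g :: "'k mat" assume "g \<in> (\<lambda>M. M + 1\<^sub>m ?n) ` nilLie lam"
    then obtain M where M: "M \<in> nilLie lam" "g = M + 1\<^sub>m ?n" by auto
    then show "g \<in> uniGrp lam" unfolding uniGrp_def nilLie_def by auto
  qed
  have inj: "inj_on (\<lambda>M. M + 1\<^sub>m ?n) (nilLie (lam) :: 'k mat set)"
  proof (rule inj_onI)
    fix A B :: "'k mat" assume A: "A \<in> nilLie lam" and B: "B \<in> nilLie lam" and e: "A + 1\<^sub>m ?n = B + 1\<^sub>m ?n"
    have Ac: "A \<in> carrier_mat ?n ?n" and Bc: "B \<in> carrier_mat ?n ?n" using A B nilLie_carrier by auto
    show "A = B"
    proof (rule eq_matI)
      fix i j assume ij: "i < dim_row B" "j < dim_col B"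
      have "(A + 1\<^sub>m ?n) $$ (i,j) = (B + 1\<^sub>m ?n) $$ (i,j)" using e by simp
      then show "A $$ (i,j) = B $$ (i,j)" using ij Ac Bc by simp
    qed (use Ac Bc in auto)
  qed
  show ?thesis unfolding eq card_image[OF inj] ..
qed

definition triv :: "nat list \<Rightarrow> bool" where "triv lam \<longleftrightarrow> (\<forall>i<sum_list lam. blk lam i = 0)"

lemma triv_single: "triv [k]" unfolding triv_def by (simp add: blk_single)
lemma triv_nil: "triv []" unfolding triv_def by simp

lemma triv_parLie: "triv lam \<Longrightarrow> parLie lam = carrier_mat (sum_list lam) (sum_list lam)"
  unfolding triv_def parLie_def by auto

lemma triv_nilLie: "triv lam \<Longrightarrow> nilLie lam = {0\<^sub>m (sum_list lam) (sum_list lam)}"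
  unfolding triv_def nilLie_def by (auto intro!: eq_matI)

lemma triv_parGrp: "triv lam \<Longrightarrow> parGrp lam = GLn (sum_list lam)"
  unfolding parGrp_eq triv_parLie by (auto simp: GLn_def)

lemma triv_levProj: "triv lam \<Longrightarrow> M \<in> carrier_mat (sum_list lam) (sum_list lam) \<Longrightarrow> levProj lam M = M"
  unfolding triv_def levProj_def by (auto intro!: eq_matI)

lemma triv_card_uniGrp: "triv lam \<Longrightarrow> card (uniGrp lam :: 'k::{finite,field} mat set) = 1"
  unfolding card_uniGrp triv_nilLie by simp



abbreviation dg :: "nat \<Rightarrow> nat \<Rightarrow> 'a::zero mat \<Rightarrow> 'a mat \<Rightarrow> 'a mat" where
  "dg k l A D \<equiv> four_block_mat A (0\<^sub>m k l) (0\<^sub>m l k) D"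

lemma fb_mult_ut: fixes A :: "'a::comm_ring_1 mat"
  assumes "A \<in> carrier_mat k k" "B \<in> carrier_mat k l" "D \<in> carrier_mat l l"
    "A' \<in> carrier_mat k k" "B' \<in> carrier_mat k l" "D' \<in> carrier_mat l l"
  shows "four_block_mat A B (0\<^sub>m l k) D * four_block_mat A' B' (0\<^sub>m l k) D'
    = four_block_mat (A * A') (A * B' + B * D') (0\<^sub>m l k) (D * D')"
proof -
  have "four_block_mat A B (0\<^sub>m l k) D * four_block_mat A' B' (0\<^sub>m l k) D'
    = four_block_mat (A * A' + B * 0\<^sub>m l k) (A * B' + B * D') (0\<^sub>m l k * A' + D * 0\<^sub>m l k) (0\<^sub>m l k * B' + D * D')"
    by (rule mult_four_block_mat) (use assms in auto)
  also have "B * 0\<^sub>m l k = 0\<^sub>m k k" using assms by (simp add: right_mult_zero_mat)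
  also have "A * A' + 0\<^sub>m k k = A * A'" using assms by simp
  also have "0\<^sub>m l k * A' = 0\<^sub>m l k" using assms by (simp add: left_mult_zero_mat)
  also have "D * 0\<^sub>m l k = 0\<^sub>m l k" using assms by (simp add: right_mult_zero_mat)
  also have "0\<^sub>m l k * B' = 0\<^sub>m l l" using assms by (simp add: left_mult_zero_mat)
  also have "0\<^sub>m l l + D * D' = D * D'" using assms by simp
  finally show ?thesis by simp
qed

lemma dg_mult: fixes A :: "'a::comm_ring_1 mat"
  assumes "A \<in> carrier_mat k k" "D \<in> carrier_mat l l" "A' \<in> carrier_mat k k" "D' \<in> carrier_mat l l"
  shows "dg k l A D * dg k l A' D' = dg k l (A * A') (D * D')"
proof -
  have "dg k l A D * dg k l A' D' = four_block_mat (A * A') (A * 0\<^sub>m k l + 0\<^sub>m k l * D') (0\<^sub>m l k) (D * D')"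
    by (rule fb_mult_ut) (use assms in auto)
  also have "A * 0\<^sub>m k l + 0\<^sub>m k l * D' = 0\<^sub>m k l" using assms by (simp add: right_mult_zero_mat left_mult_zero_mat)
  finally show ?thesis .
qed

lemma GLn_dg: assumes "h1 \<in> GLn k" "h2 \<in> GLn l" shows "dg k l h1 (h2::'k::{finite,field} mat) \<in> GLn (k+l)"
  using GLn_fb[of h1 k "0\<^sub>m k l" l h2] assms GLn_carrier by auto

lemma ginv_dg: assumes "h1 \<in> GLn k" "h2 \<in> GLn l"
  shows "ginv (dg k l h1 (h2::'k::{finite,field} mat)) = dg k l (ginv h1) (ginv h2)"
proof (rule ginv_unique[OF GLn_dg[OF assms]])
  show "dg k l (ginv h1) (ginv h2) \<in> carrier_mat (k+l) (k+l)" using ginv(1)[OF assms(1)] ginv(1)[OF assms(2)] by simp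
  have "dg k l h1 h2 * dg k l (ginv h1) (ginv h2) = dg k l (h1 * ginv h1) (h2 * ginv h2)"
    by (rule dg_mult) (use ginv(1)[OF assms(1)] ginv(1)[OF assms(2)] GLn_carrier assms in auto)
  then show "dg k l h1 h2 * dg k l (ginv h1) (ginv h2) = 1\<^sub>m (k+l)"
    using ginv(2)[OF assms(1)] ginv(2)[OF assms(2)] by simp
qed

lemma conj_block: assumes h: "h1 \<in> GLn k" "h2 \<in> GLn l"
  and c: "A \<in> carrier_mat k k" "B \<in> carrier_mat k l" "D \<in> carrier_mat l l"
  shows "conjm (dg k l h1 h2) (four_block_mat A B (0\<^sub>m l k) D) =
    four_block_mat (conjm h1 A) (h1 * B * ginv h2) (0\<^sub>m l k) (conjm (h2::'k::{finite,field} mat) D)"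
proof -
  note G = GLn_carrier[OF h(1)] GLn_carrier[OF h(2)] ginv(1)[OF h(1)] ginv(1)[OF h(2)]
  have "dg k l h1 h2 * four_block_mat A B (0\<^sub>m l k) D = four_block_mat (h1 * A) (h1 * B + 0\<^sub>m k l * D) (0\<^sub>m l k) (h2 * D)"
    by (rule fb_mult_ut) (use G c in auto)
  also have "h1 * B + 0\<^sub>m k l * D = h1 * B" using G c by (simp add: left_mult_zero_mat)
  finally have 1: "dg k l h1 h2 * four_block_mat A B (0\<^sub>m l k) D = four_block_mat (h1 * A) (h1 * B) (0\<^sub>m l k) (h2 * D)" .
  have "four_block_mat (h1 * A) (h1 * B) (0\<^sub>m l k) (h2 * D) * dg k l (ginv h1) (ginv h2)
     = four_block_mat (h1 * A * ginv h1) (h1 * A * 0\<^sub>m k l + h1 * B * ginv h2) (0\<^sub>m l k) (h2 * D * ginv h2)"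
    by (rule fb_mult_ut) (use G c in auto)
  also have "h1 * A * 0\<^sub>m k l + h1 * B * ginv h2 = h1 * B * ginv h2" using G c by (simp add: right_mult_zero_mat)
  finally have 2: "four_block_mat (h1 * A) (h1 * B) (0\<^sub>m l k) (h2 * D) * dg k l (ginv h1) (ginv h2)
     = four_block_mat (h1 * A * ginv h1) (h1 * B * ginv h2) (0\<^sub>m l k) (h2 * D * ginv h2)" .
  show ?thesis unfolding conjm_def ginv_dg[OF h] 1 2 by simp
qed



lemma HC_res_cong: assumes "\<And>w. w \<in> carrier_mat (sum_list lam) (sum_list lam) \<Longrightarrow> h w = h' w"
  shows "HC_res lam h = HC_res lam h'"
proof (rule ext)
  fix x show "HC_res lam h x = HC_res lam h' x"
    unfolding HC_res_def using assms nilLie_carrier by (auto intro!: sum.cong add_carrier_mat)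
qed

lemma levProj_carrier: "levProj lam M \<in> carrier_mat (sum_list lam) (sum_list lam)"
  unfolding levProj_def by auto

lemma HC_ind_cong: assumes "\<And>w. w \<in> carrier_mat (sum_list lam) (sum_list lam) \<Longrightarrow> h w = h' w"
  shows "HC_ind lam h = HC_ind lam h'"
proof (rule ext)
  fix x show "HC_ind lam h x = HC_ind lam h' x"
    unfolding HC_ind_def using assms levProj_carrier by (auto intro!: sum.cong)
qed

lemma HC_res_triv: assumes "triv lam"
  shows "HC_res lam h x = (if x \<in> carrier_mat (sum_list lam) (sum_list lam) then h x else (0::complex))"
  unfolding HC_res_def triv_nilLie[OF assms] triv_card_uniGrp[OF assms] by simp

lemma card_GLn_pos: "card (GLn n :: 'k::{finite,field} mat set) > 0"
  using finite_GLn GLn_one card_gt_0_iff by blast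

lemma HC_ind_triv: assumes "triv lam" and n: "n = sum_list lam"
  shows "HC_ind lam h (x::'k::{finite,field} mat) = (if x \<in> carrier_mat n n then
     (1 / of_nat (card (GLn n :: 'k mat set))) * (\<Sum>g\<in>GLn n. h (conjm g x)) else (0::complex))"
proof (cases "x \<in> carrier_mat n n")
  case True
  have "{g \<in> GLn n. conjm g x \<in> parLie lam} = GLn n"
    using conjm_carrier triv_parLie[OF assms(1)] n by auto
  moreover have "\<And>g. g \<in> GLn n \<Longrightarrow> levProj lam (conjm g x) = conjm g x"
    using triv_levProj[OF assms(1)] conjm_carrier n by auto
  ultimately show ?thesis using True unfolding HC_ind_def triv_parGrp[OF assms(1)] n by simp
qed (use n in \<open>simp add: HC_ind_def\<close>)

lemma HC_ind_triv_inv: assumes "triv lam" and n: "n = sum_list lam"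
  and inv: "\<And>x g. x \<in> carrier_mat n n \<Longrightarrow> g \<in> GLn n \<Longrightarrow> h (conjm g x) = h x"
  shows "HC_ind lam h (x::'k::{finite,field} mat) = (if x \<in> carrier_mat n n then h x else (0::complex))"
proof (cases "x \<in> carrier_mat n n")
  case True
  have "(\<Sum>g\<in>GLn n. h (conjm g x)) = of_nat (card (GLn n :: 'k mat set)) * h x"
    using inv[OF True] by simp
  moreover have "card (GLn n :: 'k mat set) \<noteq> 0" using card_GLn_pos[of n, where 'k='k] by linarith
  ultimately show ?thesis using HC_ind_triv[OF assms(1,2), of h x] True by simp
qed (use HC_ind_triv[OF assms(1,2), of h x] in simp)

lemma mult_ginv_cancel: assumes "(g::'k::{finite,field} mat) \<in> GLn n" "g0 \<in> GLn n"
  shows "g * g0 * ginv g0 = g" "g * ginv g0 * g0 = g"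
proof -
  note G = GLn_carrier[OF assms(1)] GLn_carrier[OF assms(2)] ginv[OF assms(2)]
  have "g * g0 * ginv g0 = g * (g0 * ginv g0)" using G by (intro assoc_mult_mat) auto
  then show "g * g0 * ginv g0 = g" using G by simp
  have "g * ginv g0 * g0 = g * (ginv g0 * g0)" using G by (intro assoc_mult_mat) auto
  then show "g * ginv g0 * g0 = g" using G by simp
qed

lemma HC_ind_inv: assumes g0: "g0 \<in> GLn n" and x: "x \<in> carrier_mat n n" and n: "n = sum_list lam"
  shows "HC_ind lam h (conjm g0 x) = HC_ind lam h (x::'k::{finite,field} mat)"
proof -
  have cx: "conjm g0 x \<in> carrier_mat n n" using conjm_carrier[OF g0] .
  have "(\<Sum>g\<in>{g \<in> GLn n. conjm g (conjm g0 x) \<in> parLie lam}. h (levProj lam (conjm g (conjm g0 x))))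
      = (\<Sum>g\<in>{g \<in> GLn n. conjm g x \<in> parLie lam}. h (levProj lam (conjm g x)))"
  proof (rule sum.reindex_bij_witness[where i="\<lambda>g. g * ginv g0" and j="\<lambda>g. g * g0"])
    fix g assume g: "g \<in> {g \<in> GLn n. conjm g (conjm g0 x) \<in> parLie lam}"
    show "g * g0 * ginv g0 = g" using mult_ginv_cancel(1)[OF _ g0] g by auto
    show "g * g0 \<in> {g \<in> GLn n. conjm g x \<in> parLie lam}"
      using g GLn_mult[OF _ g0] conjm_mult[OF _ g0 x] by auto
    show "h (levProj lam (conjm (g * g0) x)) = h (levProj lam (conjm g (conjm g0 x)))"
      using g conjm_mult[OF _ g0 x] by auto
  next
    fix g assume g: "g \<in> {g \<in> GLn n. conjm g x \<in> parLie lam}"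
    show "g * ginv g0 * g0 = g" using mult_ginv_cancel(2)[OF _ g0] g by auto
    have gi: "g * ginv g0 \<in> GLn n" using g GLn_mult[OF _ GLn_ginv[OF g0]] by auto
    have "conjm (g * ginv g0) (conjm g0 x) = conjm g x"
      using conjm_mult[OF gi g0 x, symmetric] mult_ginv_cancel(2)[OF _ g0] g by auto
    then show "g * ginv g0 \<in> {g \<in> GLn n. conjm g (conjm g0 x) \<in> parLie lam}" using gi g by auto
  qed
  then show ?thesis unfolding HC_ind_def using x cx n by simp
qed

lemma HC_ind_classfun: "HC_ind lam h \<in> classfun (sum_list lam)"
proof -
  have "\<forall>x. x \<notin> carrier_mat (sum_list lam) (sum_list lam) \<longrightarrow> HC_ind lam h x = 0"
    by (auto simp: HC_ind_def)
  moreover have "\<forall>x\<in>carrier_mat (sum_list lam) (sum_list lam). \<forall>g\<in>GLn (sum_list lam). HC_ind lam h (conjm g x) = HC_ind lam h x"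
    using HC_ind_inv[OF _ _ refl] by blast
  ultimately show ?thesis unfolding classfun_def by blast
qed



lemma parLie_kl: assumes "(M::'k::{finite,field} mat) \<in> carrier_mat (k+l) (k+l)"
  shows "M \<in> parLie [k,l] \<longleftrightarrow> llb k l M = 0\<^sub>m l k"
  using parLie_append[of k "[k]" l "[l]" M] assms by (simp add: triv_parLie[OF triv_single])

lemma nilLie_single: "nilLie [k] = {0\<^sub>m k k}"
  using triv_nilLie[OF triv_single] by simp

lemma card_nilLie_kl: "card (nilLie [k,l] :: 'k::{finite,field} mat set) = card (carrier_mat k l :: 'k mat set)"
  using sum_nilLie_append(2)[of k "[k]" l "[l]"] by (simp add: nilLie_single)

lemma card_parGrp_kl: "card (parGrp [k,l] :: 'k::{finite,field} mat set) =
   card (GLn k :: 'k mat set) * card (GLn l :: 'k mat set) * card (carrier_mat k l :: 'k mat set)"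
  using card_parGrp_append[of k "[k]" l "[l]"] by (simp add: triv_parGrp[OF triv_single])

lemma dg_add_fb: assumes "x \<in> carrier_mat k k" "y \<in> carrier_mat l l" "A \<in> carrier_mat k k" "B \<in> carrier_mat k l" "D \<in> carrier_mat l l"
  shows "dg k l x y + four_block_mat A B (0\<^sub>m l k) D = four_block_mat (x + A) B (0\<^sub>m l k) (y + (D::'a::monoid_add mat))"
  by (rule eq_matI) (use assms in auto)

lemma coprod_formula: assumes "(w::'k::{finite,field} mat) \<in> carrier_mat k k" "v \<in> carrier_mat l l"
  shows "coprod k l f w v = (1 / of_nat (card (carrier_mat k l :: 'k mat set))) *
     (\<Sum>B\<in>carrier_mat k l. f (four_block_mat w B (0\<^sub>m l k) v))"
proof -
  have "(\<Sum>y\<in>nilLie [k,l]. f (dg k l w v + y)) =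
     (\<Sum>A\<in>nilLie [k]. \<Sum>D\<in>nilLie [l]. \<Sum>B\<in>carrier_mat k l. f (dg k l w v + four_block_mat A B (0\<^sub>m l k) D))"
    using sum_nilLie_append(1)[of k "[k]" l "[l]" "\<lambda>y. f (dg k l w v + y)"] by simp
  also have "\<dots> = (\<Sum>B\<in>carrier_mat k l. f (four_block_mat w B (0\<^sub>m l k) v))"
    unfolding nilLie_single using dg_add_fb[OF assms zero_carrier_mat _ zero_carrier_mat] assms by simp
  finally show ?thesis unfolding coprod_def HC_res_def card_uniGrp card_nilLie_kl using assms by simp
qed

lemma res_trans:
  assumes kl: "k = sum_list al" "l = sum_list be" and x: "(x::'k::{finite,field} mat) \<in> carrier_mat k k"
    and y: "y \<in> carrier_mat l l"
  shows "HC_res al (\<lambda>w. HC_res be (\<lambda>v. coprod k l f w v) y) x = HC_res (al @ be) f (dg k l x y)"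
proof -
  let ?a = "of_nat (card (nilLie al :: 'k mat set)) :: complex"
  let ?b = "of_nat (card (nilLie be :: 'k mat set)) :: complex"
  let ?c = "of_nat (card (carrier_mat k l :: 'k mat set)) :: complex"
  let ?S = "\<lambda>u u'. \<Sum>B\<in>carrier_mat k l. f (four_block_mat (x + u) B (0\<^sub>m l k) (y + u'))"
  have L: "HC_res al (\<lambda>w. HC_res be (\<lambda>v. coprod k l f w v) y) x =
     (1 / ?a) * (\<Sum>u\<in>nilLie al. (1 / ?b) * (\<Sum>u'\<in>nilLie be. (1 / ?c) * ?S u u'))"
  proof -
    have "\<And>u u'. u \<in> nilLie al \<Longrightarrow> u' \<in> nilLie be \<Longrightarrow> coprod k l f (x + u) (y + u') = (1 / ?c) * ?S u u'"
      using coprod_formula nilLie_carrier kl x y by (metis add_carrier_mat)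
    then show ?thesis unfolding HC_res_def card_uniGrp using x y kl nilLie_carrier
      by (auto intro!: sum.cong)
  qed
  have R: "HC_res (al @ be) f (dg k l x y) = (1 / (?a * ?b * ?c)) * (\<Sum>u\<in>nilLie al. \<Sum>u'\<in>nilLie be. ?S u u')"
  proof -
    have "(\<Sum>t\<in>nilLie (al @ be). f (dg k l x y + t)) =
       (\<Sum>A\<in>nilLie al. \<Sum>D\<in>nilLie be. \<Sum>B\<in>carrier_mat k l. f (dg k l x y + four_block_mat A B (0\<^sub>m l k) D))"
      by (rule sum_nilLie_append(1)[OF kl])
    also have "\<dots> = (\<Sum>u\<in>nilLie al. \<Sum>u'\<in>nilLie be. ?S u u')"
    proof (intro sum.cong refl)
      fix A D B :: "'k mat" assume A: "A \<in> nilLie al" and D: "D \<in> nilLie be" and B: "B \<in> carrier_mat k l"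
      have Ac: "A \<in> carrier_mat k k" using nilLie_carrier[OF A] kl by simp
      have Dc: "D \<in> carrier_mat l l" using nilLie_carrier[OF D] kl by simp
      show "f (dg k l x y + four_block_mat A B (0\<^sub>m l k) D) = f (four_block_mat (x + A) B (0\<^sub>m l k) (y + D))"
        using dg_add_fb[OF x y Ac B Dc] by simp
    qed
    finally show ?thesis unfolding HC_res_def card_uniGrp sum_nilLie_append(2)[OF kl] using x y kl by simp
  qed
  show ?thesis unfolding L R by (simp add: sum_distrib_left mult.assoc)
qed


lemma fb_parLie: assumes kl: "k = sum_list al" "l = sum_list be"
  and c: "A \<in> carrier_mat k k" "B \<in> carrier_mat k l" "D \<in> carrier_mat l l"
  shows "four_block_mat A B (0\<^sub>m l k) (D::'k::{finite,field} mat) \<in> parLie (al @ be) \<longleftrightarrow> A \<in> parLie al \<and> D \<in> parLie be"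
  using parLie_append[OF kl, of "four_block_mat A B (0\<^sub>m l k) D"] c blocks_fb[OF c(1,2) zero_carrier_mat c(3)]
  by simp

lemma fb_levProj: assumes kl: "k = sum_list al" "l = sum_list be"
  and c: "A \<in> carrier_mat k k" "B \<in> carrier_mat k l" "D \<in> carrier_mat l l"
  shows "levProj (al @ be) (four_block_mat A B (0\<^sub>m l k) (D::'k::{finite,field} mat)) = dg k l (levProj al A) (levProj be D)"
  using levProj_append[OF kl, of "four_block_mat A B (0\<^sub>m l k) D"] blocks_fb[OF c(1,2) zero_carrier_mat c(3)]
  by simp

lemma ginv_cancel: assumes "(d::'k::{finite,field} mat) \<in> GLn n" "g \<in> GLn n"
  shows "ginv d * (d * g) = g" "d * (ginv d * g) = g"
proof -
  note G = GLn_carrier[OF assms(1)] GLn_carrier[OF assms(2)] ginv[OF assms(1)]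
  have "ginv d * (d * g) = (ginv d * d) * g" using G by (intro assoc_mult_mat[symmetric]) auto
  then show "ginv d * (d * g) = g" using G by simp
  have "d * (ginv d * g) = (d * ginv d) * g" using G by (intro assoc_mult_mat[symmetric]) auto
  then show "d * (ginv d * g) = g" using G by simp
qed

lemma parLie_kl_decomp: assumes "(M::'k::{finite,field} mat) \<in> parLie [k,l]"
  shows "M = four_block_mat (ulb k M) (urb k l M) (0\<^sub>m l k) (lrb k l M)"
proof -
  have Mc: "M \<in> carrier_mat (k+l) (k+l)" using parLie_carrier[OF assms] by simp
  show ?thesis using block_decomp[OF Mc] parLie_kl[OF Mc] assms by simp
qed

lemma block_conj_step:
  assumes g: "g \<in> GLn (k+l)" and z: "z \<in> carrier_mat (k+l) (k+l)" and M: "conjm g z \<in> parLie [k,l]"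
    and h: "h1 \<in> GLn k" "h2 \<in> GLn l"
  shows "conjm (dg k l h1 h2 * g) z = four_block_mat (conjm h1 (ulb k (conjm g z)))
     (h1 * urb k l (conjm g z) * ginv h2) (0\<^sub>m l k) (conjm h2 (lrb k l (conjm g (z::'k::{finite,field} mat))))"
proof -
  have "conjm (dg k l h1 h2 * g) z = conjm (dg k l h1 h2) (conjm g z)"
    by (rule conjm_mult[OF GLn_dg[OF h] g z])
  also have "conjm g z = four_block_mat (ulb k (conjm g z)) (urb k l (conjm g z)) (0\<^sub>m l k) (lrb k l (conjm g z))"
    by (rule parLie_kl_decomp[OF M])
  finally show ?thesis using conj_block[OF h] by simp
qed


lemma ind_trans:
  assumes kl: "k = sum_list al" "l = sum_list be"
  shows "hprod k l (\<lambda>x y. HC_ind al (\<lambda>w. HC_ind be (\<lambda>v. H (dg k l w v)) y) x) z = HC_ind (al @ be) H (z::'k::{finite,field} mat)"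
proof (cases "z \<in> carrier_mat (k+l) (k+l)")
  case False
  then show ?thesis using kl by (simp add: hprod_def HC_ind_def)
next
  case True
  note z = True
  define Aset where "Aset = {g \<in> GLn (k+l). conjm g z \<in> parLie [k,l]}"
  define Bset where "Bset = {g \<in> GLn (k+l). conjm g z \<in> parLie (al @ be)}"
  define X where "X g = ulb k (conjm g z)" for g
  define Y where "Y g = lrb k l (conjm g z)" for g
  define S1 where "S1 g = {h1 \<in> GLn k. conjm h1 (X g) \<in> parLie al}" for g
  define S2 where "S2 g = {h2 \<in> GLn l. conjm h2 (Y g) \<in> parLie be}" for g
  define Phi where "Phi g' = H (levProj (al @ be) (conjm g' z))" for g'
  define Psi where "Psi g h1 h2 = H (dg k l (levProj al (conjm h1 (X g))) (levProj be (conjm h2 (Y g))))" for g h1 h2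
  define Pkl where "Pkl = (of_nat (card (parGrp [k,l] :: 'k mat set)) :: complex)"
  define Pa where "Pa = (of_nat (card (parGrp al :: 'k mat set)) :: complex)"
  define Pb where "Pb = (of_nat (card (parGrp be :: 'k mat set)) :: complex)"
  define Pab where "Pab = (of_nat (card (parGrp (al @ be) :: 'k mat set)) :: complex)"
  define Gk where "Gk = (of_nat (card (GLn k :: 'k mat set)) :: complex)"
  define Gl where "Gl = (of_nat (card (GLn l :: 'k mat set)) :: complex)"
  define Cc where "Cc = (of_nat (card (carrier_mat k l :: 'k mat set)) :: complex)"
  have finA: "finite Aset" unfolding Aset_def by (rule finite_subset[OF _ finite_GLn]) auto
  have finB: "finite Bset" unfolding Bset_def by (rule finite_subset[OF _ finite_GLn]) auto
  have finS1: "finite (S1 g)" for g unfolding S1_def by (rule finite_subset[OF _ finite_GLn]) auto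
  have finS2: "finite (S2 g)" for g unfolding S2_def by (rule finite_subset[OF _ finite_GLn]) auto
  have Xc: "X g \<in> carrier_mat k k" for g unfolding X_def by simp
  have Yc: "Y g \<in> carrier_mat l l" for g unfolding Y_def by simp
  have step1: "hprod k l (\<lambda>x y. HC_ind al (\<lambda>w. HC_ind be (\<lambda>v. H (dg k l w v)) y) x) z
    = (1 / Pkl) * (\<Sum>g\<in>Aset. (1 / Pa) * (\<Sum>h1\<in>S1 g. (1 / Pb) * (\<Sum>h2\<in>S2 g. Psi g h1 h2)))"
  proof -
    have "\<And>g. HC_ind al (\<lambda>w. HC_ind be (\<lambda>v. H (dg k l w v)) (Y g)) (X g)
        = (1 / Pa) * (\<Sum>h1\<in>S1 g. (1 / Pb) * (\<Sum>h2\<in>S2 g. Psi g h1 h2))"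
      unfolding HC_ind_def S1_def S2_def Psi_def Pa_def Pb_def using Xc Yc kl by simp
    moreover have "\<And>g. mat k k (\<lambda>(i,j). conjm g z $$ (i,j)) = X g" unfolding X_def ulb_def ..
    moreover have "\<And>g. mat l l (\<lambda>(i,j). conjm g z $$ (k + i, k + j)) = Y g" unfolding Y_def lrb_def ..
    ultimately show ?thesis unfolding hprod_def Aset_def Pkl_def using z by simp
  qed
  have step2: "(\<Sum>g\<in>Aset. (1 / Pa) * (\<Sum>h1\<in>S1 g. (1 / Pb) * (\<Sum>h2\<in>S2 g. Psi g h1 h2)))
     = (1 / Pa) * (1 / Pb) * (\<Sum>p\<in>Sigma Aset (\<lambda>g. S1 g \<times> S2 g). Psi (fst p) (fst (snd p)) (snd (snd p)))"
  proof -
    have "(\<Sum>g\<in>Aset. (1 / Pa) * (\<Sum>h1\<in>S1 g. (1 / Pb) * (\<Sum>h2\<in>S2 g. Psi g h1 h2)))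
      = (1 / Pa) * (1 / Pb) * (\<Sum>g\<in>Aset. \<Sum>h\<in>S1 g \<times> S2 g. Psi g (fst h) (snd h))"
      by (simp add: sum_distrib_left sum.cartesian_product finS1 finS2 mult.assoc split_def)
    also have "(\<Sum>g\<in>Aset. \<Sum>h\<in>S1 g \<times> S2 g. Psi g (fst h) (snd h))
        = (\<Sum>p\<in>Sigma Aset (\<lambda>g. S1 g \<times> S2 g). Psi (fst p) (fst (snd p)) (snd (snd p)))"
      by (subst sum.Sigma) (use finA finS1 finS2 in \<open>auto simp: split_def\<close>)
    finally show ?thesis .
  qed
  define Ii where "Ii = (\<lambda>q::'k mat \<times> 'k mat \<times> 'k mat. (ginv (dg k l (fst (snd q)) (snd (snd q))) * fst q, snd q))"
  define Jj where "Jj = (\<lambda>p::'k mat \<times> 'k mat \<times> 'k mat. (dg k l (fst (snd p)) (snd (snd p)) * fst p, snd p))"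
  have P1: "Ii (Jj p) = p \<and> Jj p \<in> Bset \<times> ((GLn k :: 'k mat set) \<times> (GLn l :: 'k mat set)) \<and> Phi (fst (Jj p)) = Psi (fst p) (fst (snd p)) (snd (snd p))"
    if p: "p \<in> Sigma Aset (\<lambda>g. S1 g \<times> S2 g)" for p
  proof -
    obtain g h1 h2 where pe: "p = (g, h1, h2)" by (cases p) auto
    have g: "g \<in> GLn (k+l)" and gA: "conjm g z \<in> parLie [k,l]" using p pe unfolding Aset_def by auto
    have h1: "h1 \<in> GLn k" and h2: "h2 \<in> GLn l" and h1S: "conjm h1 (X g) \<in> parLie al"
      and h2S: "conjm h2 (Y g) \<in> parLie be" using p pe unfolding S1_def S2_def by auto
    have d: "dg k l h1 h2 \<in> GLn (k+l)" by (rule GLn_dg[OF h1 h2])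
    note st = block_conj_step[OF g z gA h1 h2, folded X_def Y_def]
    have c3: "conjm h1 (X g) \<in> carrier_mat k k" "h1 * urb k l (conjm g z) * ginv h2 \<in> carrier_mat k l"
      "conjm h2 (Y g) \<in> carrier_mat l l"
      using conjm_carrier[OF h1] conjm_carrier[OF h2] GLn_carrier[OF h1] ginv(1)[OF h2] by auto
    have r1: "Ii (Jj p) = p"
      using ginv_cancel(1)[OF d g] pe unfolding Ii_def Jj_def by simp
    have "conjm (dg k l h1 h2 * g) z \<in> parLie (al @ be)"
      unfolding st fb_parLie[OF kl c3] using h1S h2S by simp
    then have r2: "Jj p \<in> Bset \<times> ((GLn k :: 'k mat set) \<times> (GLn l :: 'k mat set))"
      using pe GLn_mult[OF d g] h1 h2 unfolding Bset_def Jj_def by simp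
    have r3: "Phi (fst (Jj p)) = Psi (fst p) (fst (snd p)) (snd (snd p))"
      unfolding Phi_def Psi_def pe Jj_def using st fb_levProj[OF kl c3] by simp
    show ?thesis using r1 r2 r3 by blast
  qed
  have P2: "Jj (Ii q) = q \<and> Ii q \<in> Sigma Aset (\<lambda>g. S1 g \<times> S2 g)" if q: "q \<in> Bset \<times> ((GLn k :: 'k mat set) \<times> (GLn l :: 'k mat set))" for q
  proof -
    obtain g' h1 h2 where qe: "q = (g', h1, h2)" by (cases q) auto
    have g': "g' \<in> GLn (k+l)" and gB: "conjm g' z \<in> parLie (al @ be)" using q qe unfolding Bset_def by auto
    have h1: "h1 \<in> GLn k" and h2: "h2 \<in> GLn l" using q qe by auto
    have d: "dg k l h1 h2 \<in> GLn (k+l)" by (rule GLn_dg[OF h1 h2])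
    have r1: "Jj (Ii q) = q"
      using ginv_cancel(2)[OF d g'] qe unfolding Ii_def Jj_def by simp
    define g where "g = ginv (dg k l h1 h2) * g'"
    have g: "g \<in> GLn (k+l)" unfolding g_def by (rule GLn_mult[OF GLn_ginv[OF d] g'])
    have dg_g: "dg k l h1 h2 * g = g'" unfolding g_def by (rule ginv_cancel(2)[OF d g'])
    let ?M = "conjm g' z"
    have Mc: "?M \<in> carrier_mat (k+l) (k+l)" using conjm_carrier[OF g'] .
    have Mkl: "llb k l ?M = 0\<^sub>m l k" and Mu: "ulb k ?M \<in> parLie al" and Ml: "lrb k l ?M \<in> parLie be"
      using parLie_append[OF kl Mc] gB by auto
    have Mdec: "?M = four_block_mat (ulb k ?M) (urb k l ?M) (0\<^sub>m l k) (lrb k l ?M)"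
      using block_decomp[OF Mc] Mkl by simp
    have gi: "ginv h1 \<in> GLn k" "ginv h2 \<in> GLn l" using GLn_ginv h1 h2 by auto
    have "conjm g z = conjm (ginv (dg k l h1 h2)) ?M"
      unfolding g_def by (rule conjm_mult[OF GLn_ginv[OF d] g' z])
    also have "\<dots> = conjm (dg k l (ginv h1) (ginv h2)) ?M" unfolding ginv_dg[OF h1 h2] ..
    also have "\<dots> = four_block_mat (conjm (ginv h1) (ulb k ?M)) (ginv h1 * urb k l ?M * ginv (ginv h2)) (0\<^sub>m l k)
        (conjm (ginv h2) (lrb k l ?M))"
      by (subst Mdec, rule conj_block[OF gi]) auto
    finally have cg: "conjm g z = four_block_mat (conjm (ginv h1) (ulb k ?M)) (ginv h1 * urb k l ?M * ginv (ginv h2)) (0\<^sub>m l k)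
        (conjm (ginv h2) (lrb k l ?M))" .
    have c3: "conjm (ginv h1) (ulb k ?M) \<in> carrier_mat k k" "ginv h1 * urb k l ?M * ginv (ginv h2) \<in> carrier_mat k l"
      "conjm (ginv h2) (lrb k l ?M) \<in> carrier_mat l l"
      using conjm_carrier[OF gi(1)] conjm_carrier[OF gi(2)] ginv(1)[OF h1] ginv(1)[OF gi(2)] by auto
    have cgc: "conjm g z \<in> carrier_mat (k+l) (k+l)" using conjm_carrier[OF g] .
    have "llb k l (conjm g z) = 0\<^sub>m l k" unfolding cg using blocks_fb[OF c3(1,2) zero_carrier_mat c3(3)] by simp
    then have gA: "g \<in> Aset" unfolding Aset_def using g parLie_kl[OF cgc] by simp
    have Xg: "X g = conjm (ginv h1) (ulb k ?M)" unfolding X_def cg using blocks_fb[OF c3(1,2) zero_carrier_mat c3(3)] by simp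
    have Yg: "Y g = conjm (ginv h2) (lrb k l ?M)" unfolding Y_def cg using blocks_fb[OF c3(1,2) zero_carrier_mat c3(3)] by simp
    have "conjm h1 (X g) = ulb k ?M" unfolding Xg using conjm_ginv(2)[OF h1] by simp
    moreover have "conjm h2 (Y g) = lrb k l ?M" unfolding Yg using conjm_ginv(2)[OF h2] by simp
    ultimately have "h1 \<in> S1 g" "h2 \<in> S2 g" unfolding S1_def S2_def using h1 h2 Mu Ml by auto
    then have r2: "Ii q \<in> Sigma Aset (\<lambda>g. S1 g \<times> S2 g)"
      using gA qe g_def unfolding Ii_def by simp
    show ?thesis using r1 r2 by blast
  qed
  have step3: "(\<Sum>p\<in>Sigma Aset (\<lambda>g. S1 g \<times> S2 g). Psi (fst p) (fst (snd p)) (snd (snd p)))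
     = (\<Sum>q\<in>Bset \<times> ((GLn k :: 'k mat set) \<times> (GLn l :: 'k mat set)). Phi (fst q))"
  proof -
    note P1a = P1[THEN conjunct1] and P1b = P1[THEN conjunct2, THEN conjunct1]
      and P1c = P1[THEN conjunct2, THEN conjunct2]
    note P2a = P2[THEN conjunct1] and P2b = P2[THEN conjunct2]
    have inj: "inj_on Jj (Sigma Aset (\<lambda>g. S1 g \<times> S2 g))" by (rule inj_on_inverseI[of _ Ii], rule P1a)
    have im: "Jj ` (Sigma Aset (\<lambda>g. S1 g \<times> S2 g)) = Bset \<times> ((GLn k :: 'k mat set) \<times> (GLn l :: 'k mat set))"
    proof (rule Set.set_eqI, rule iffI)
      fix q assume "q \<in> Jj ` (Sigma Aset (\<lambda>g. S1 g \<times> S2 g))" then show "q \<in> Bset \<times> ((GLn k :: 'k mat set) \<times> (GLn l :: 'k mat set))" using P1b by auto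
    next
      fix q assume q: "q \<in> Bset \<times> ((GLn k :: 'k mat set) \<times> (GLn l :: 'k mat set))"
      have "q = Jj (Ii q)" using P2a[OF q] by simp
      then show "q \<in> Jj ` (Sigma Aset (\<lambda>g. S1 g \<times> S2 g))" using P2b[OF q] by (rule image_eqI)
    qed
    have "(\<Sum>q\<in>Bset \<times> ((GLn k :: 'k mat set) \<times> (GLn l :: 'k mat set)). Phi (fst q)) = (\<Sum>p\<in>Sigma Aset (\<lambda>g. S1 g \<times> S2 g). Phi (fst (Jj p)))"
      unfolding im[symmetric] sum.reindex[OF inj] by (simp add: comp_def)
    also have "\<dots> = (\<Sum>p\<in>Sigma Aset (\<lambda>g. S1 g \<times> S2 g). Psi (fst p) (fst (snd p)) (snd (snd p)))"
      by (rule sum.cong[OF refl], rule P1c)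
    finally show ?thesis by simp
  qed
  have step4: "(\<Sum>q\<in>Bset \<times> ((GLn k :: 'k mat set) \<times> (GLn l :: 'k mat set)). Phi (fst q)) = Gk * Gl * (\<Sum>g\<in>Bset. Phi g)"
  proof -
    have "(\<Sum>x\<in>Bset. \<Sum>y\<in>(GLn k :: 'k mat set) \<times> (GLn l :: 'k mat set). Phi x) = (\<Sum>q\<in>Bset \<times> ((GLn k :: 'k mat set) \<times> (GLn l :: 'k mat set)). Phi (fst q))"
      by (simp only: sum.cartesian_product split_def)
    then have "(\<Sum>q\<in>Bset \<times> ((GLn k :: 'k mat set) \<times> (GLn l :: 'k mat set)). Phi (fst q)) = (\<Sum>x\<in>Bset. \<Sum>y\<in>(GLn k :: 'k mat set) \<times> (GLn l :: 'k mat set). Phi x)"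
      by simp
    also have "\<dots> = (\<Sum>x\<in>Bset. Gk * Gl * Phi x)"
      by (simp add: card_cartesian_product Gk_def Gl_def)
    finally show ?thesis by (simp add: sum_distrib_left)
  qed
  have Pkl_eq: "Pkl = Gk * Gl * Cc" unfolding Pkl_def Gk_def Gl_def Cc_def card_parGrp_kl by simp
  have Pab_eq: "Pab = Pa * Pb * Cc" unfolding Pab_def Pa_def Pb_def Cc_def card_parGrp_append[OF kl] by simp
  have Gk0: "Gk \<noteq> 0" unfolding Gk_def using card_GLn_pos[of k, where 'k='k] by simp
  have Gl0: "Gl \<noteq> 0" unfolding Gl_def using card_GLn_pos[of l, where 'k='k] by simp
  have RHS: "HC_ind (al @ be) H z = (1 / Pab) * (\<Sum>g\<in>Bset. Phi g)"
    unfolding HC_ind_def Pab_def Bset_def Phi_def using z kl by simp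
  show ?thesis unfolding step1 step2 step3 step4 RHS Pkl_eq Pab_eq using Gk0 Gl0 by (simp add: field_simps)
qed



lemma bij_mid: assumes a: "(a::'k::{finite,field} mat) \<in> GLn k" and b: "b \<in> GLn l" and B: "B \<in> carrier_mat k l"
  shows "ginv a * (a * B * ginv b) * b = B"
proof -
  note G = GLn_carrier[OF a] GLn_carrier[OF b] ginv[OF a] ginv[OF b]
  have "ginv a * (a * B * ginv b) * b = ginv a * ((a * B * ginv b) * b)"
    using G B by (intro assoc_mult_mat) auto
  also have "(a * B * ginv b) * b = (a * B) * (ginv b * b)" using G B by (intro assoc_mult_mat) auto
  also have "\<dots> = a * B" using G B by simp
  also have "ginv a * (a * B) = (ginv a * a) * B" using G B by (intro assoc_mult_mat[symmetric]) auto
  also have "\<dots> = B" using G B by simp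
  finally show ?thesis .
qed

lemma coprod_inv: assumes f: "f \<in> classfun (k+l)" and h: "h1 \<in> GLn k" "h2 \<in> GLn l"
  and x: "(x::'k::{finite,field} mat) \<in> carrier_mat k k" and y: "y \<in> carrier_mat l l"
  shows "coprod k l f (conjm h1 x) (conjm h2 y) = coprod k l f x y"
proof -
  have cx: "conjm h1 x \<in> carrier_mat k k" "conjm h2 y \<in> carrier_mat l l"
    using conjm_carrier h by auto
  define Ii where "Ii = (\<lambda>B::'k mat. h1 * B * ginv h2)"
  define Jj where "Jj = (\<lambda>B::'k mat. ginv h1 * B * h2)"
  have JI: "Jj (Ii B) = B" if "B \<in> carrier_mat k l" for B
    unfolding Ii_def Jj_def by (rule bij_mid[OF h that])
  have IJ: "Ii (Jj B) = B" if "B \<in> carrier_mat k l" for B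
    unfolding Ii_def Jj_def using bij_mid[OF GLn_ginv[OF h(1)] GLn_ginv[OF h(2)] that] by (simp add: ginv_ginv[OF h(1)] ginv_ginv[OF h(2)])
  have Ic: "Ii B \<in> carrier_mat k l" if "B \<in> carrier_mat k l" for B
    unfolding Ii_def using that GLn_carrier[OF h(1)] ginv(1)[OF h(2)] by auto
  have Jc: "Jj B \<in> carrier_mat k l" if "B \<in> carrier_mat k l" for B
    unfolding Jj_def using that GLn_carrier[OF h(2)] ginv(1)[OF h(1)] by auto
  have inj: "inj_on Ii (carrier_mat k l)" by (rule inj_on_inverseI[of _ Jj], rule JI)
  have im: "Ii ` carrier_mat k l = carrier_mat k l"
  proof (rule Set.set_eqI, rule iffI)
    fix B :: "'k mat" assume "B \<in> Ii ` carrier_mat k l" then show "B \<in> carrier_mat k l" using Ic by auto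
  next
    fix B :: "'k mat" assume B: "B \<in> carrier_mat k l"
    have "B = Ii (Jj B)" using IJ[OF B] by simp
    then show "B \<in> Ii ` carrier_mat k l" using Jc[OF B] by (rule image_eqI)
  qed
  have "(\<Sum>B\<in>carrier_mat k l. f (four_block_mat (conjm h1 x) B (0\<^sub>m l k) (conjm h2 y)))
      = (\<Sum>B\<in>carrier_mat k l. f (four_block_mat (conjm h1 x) (Ii B) (0\<^sub>m l k) (conjm h2 y)))"
    by (subst im[symmetric], subst sum.reindex[OF inj]) (simp add: comp_def)
  also have "\<dots> = (\<Sum>B\<in>carrier_mat k l. f (four_block_mat x B (0\<^sub>m l k) y))"
  proof (rule sum.cong[OF refl])
    fix B :: "'k mat" assume B: "B \<in> carrier_mat k l"
    have "four_block_mat (conjm h1 x) (Ii B) (0\<^sub>m l k) (conjm h2 y) = conjm (dg k l h1 h2) (four_block_mat x B (0\<^sub>m l k) y)"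
      unfolding Ii_def by (rule conj_block[OF h x B y, symmetric])
    moreover have "four_block_mat x B (0\<^sub>m l k) y \<in> carrier_mat (k+l) (k+l)" using x y by simp
    ultimately show "f (four_block_mat (conjm h1 x) (Ii B) (0\<^sub>m l k) (conjm h2 y)) = f (four_block_mat x B (0\<^sub>m l k) y)"
      using f GLn_dg[OF h] unfolding classfun_def by auto
  qed
  finally show ?thesis unfolding coprod_formula[OF x y] coprod_formula[OF cx] by simp
qed

lemma coprod_inv1: assumes f: "f \<in> classfun (k+l)" and h: "h1 \<in> GLn k"
  and x: "(x::'k::{finite,field} mat) \<in> carrier_mat k k" and y: "y \<in> carrier_mat l l"
  shows "coprod k l f (conjm h1 x) y = coprod k l f x y"
  using coprod_inv[OF f h GLn_one x y] conjm_one[OF y] by simp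

lemma coprod_inv2: assumes f: "f \<in> classfun (k+l)" and h: "h2 \<in> GLn l"
  and x: "(x::'k::{finite,field} mat) \<in> carrier_mat k k" and y: "y \<in> carrier_mat l l"
  shows "coprod k l f x (conjm h2 y) = coprod k l f x y"
  using coprod_inv[OF f GLn_one h x y] conjm_one[OF x] by simp

lemma hprod_cong: assumes "\<And>x y. x \<in> carrier_mat k k \<Longrightarrow> y \<in> carrier_mat l l \<Longrightarrow> F x y = F' x y"
  shows "hprod k l F z = hprod k l F' z"
  unfolding hprod_def using assms by (auto intro!: sum.cong)

lemma Hform: assumes kl: "k = sum_list al" "l = sum_list be"
  and w: "(w::'k::{finite,field} mat) \<in> carrier_mat k k" and v: "v \<in> carrier_mat l l"
  shows "HC_res (al @ be) f (dg k l w v) = HC_res al (\<lambda>w'. HC_res be (\<lambda>v'. coprod k l f w' v') v) w"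
  using res_trans[OF kl w v] by simp


lemma Lh: assumes f: "f \<in> classfun (k+l)" and kl: "k = sum_list al" "l = sum_list be" and tb: "triv be"
  shows "hprod k l (\<lambda>x y. HC_ind al (HC_res al (\<lambda>x'. coprod k l f x' y)) x) z
     = HC_ind (al @ be) (HC_res (al @ be) f) (z::'k::{finite,field} mat)"
proof -
  define H where "H = HC_res (al @ be) f"
  have key: "H (dg k l w v) = HC_res al (\<lambda>w'. coprod k l f w' v) w"
    if w: "w \<in> carrier_mat k k" and v: "v \<in> carrier_mat l l" for w v :: "'k mat"
  proof -
    have "H (dg k l w v) = HC_res al (\<lambda>w'. HC_res be (\<lambda>v'. coprod k l f w' v') v) w"
      unfolding H_def by (rule Hform[OF kl w v])
    also have "\<dots> = HC_res al (\<lambda>w'. coprod k l f w' v) w"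
      by (rule fun_cong[OF HC_res_cong]) (use v kl in \<open>simp add: HC_res_triv[OF tb]\<close>)
    finally show ?thesis .
  qed
  have inv: "H (dg k l w (conjm g v)) = H (dg k l w v)"
    if w: "w \<in> carrier_mat k k" and v: "v \<in> carrier_mat l l" and g: "g \<in> GLn l" for w v g :: "'k mat"
  proof -
    have cv: "conjm g v \<in> carrier_mat l l" using conjm_carrier[OF g] .
    show ?thesis unfolding key[OF w v] key[OF w cv]
      by (rule fun_cong[OF HC_res_cong]) (use coprod_inv2[OF f g _ v] kl in simp)
  qed
  have inner: "HC_ind be (\<lambda>v. H (dg k l w v)) y = H (dg k l w y)"
    if w: "w \<in> carrier_mat k k" and y: "y \<in> carrier_mat l l" for w y :: "'k mat"
    using HC_ind_triv_inv[OF tb kl(2), of "\<lambda>v. H (dg k l w v)" y] inv[OF w] y by simp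
  have "hprod k l (\<lambda>x y. HC_ind al (HC_res al (\<lambda>x'. coprod k l f x' y)) x) z
      = hprod k l (\<lambda>x y. HC_ind al (\<lambda>w. HC_ind be (\<lambda>v. H (dg k l w v)) y) x) z"
  proof (rule hprod_cong)
    fix x y :: "'k mat" assume x: "x \<in> carrier_mat k k" and y: "y \<in> carrier_mat l l"
    show "HC_ind al (HC_res al (\<lambda>x'. coprod k l f x' y)) x = HC_ind al (\<lambda>w. HC_ind be (\<lambda>v. H (dg k l w v)) y) x"
      by (rule fun_cong[OF HC_ind_cong]) (use inner key y kl in simp)
  qed
  also have "\<dots> = HC_ind (al @ be) H z" by (rule ind_trans[OF kl])
  finally show ?thesis unfolding H_def .
qed

lemma Rh: assumes f: "f \<in> classfun (k+l)" and kl: "k = sum_list al" "l = sum_list be" and ta: "triv al"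
  shows "hprod k l (\<lambda>x y. HC_ind be (HC_res be (\<lambda>y'. coprod k l f x y')) y) z
     = HC_ind (al @ be) (HC_res (al @ be) f) (z::'k::{finite,field} mat)"
proof -
  define H where "H = HC_res (al @ be) f"
  have key: "H (dg k l w v) = HC_res be (\<lambda>v'. coprod k l f w v') v"
    if w: "w \<in> carrier_mat k k" and v: "v \<in> carrier_mat l l" for w v :: "'k mat"
  proof -
    have "H (dg k l w v) = HC_res al (\<lambda>w'. HC_res be (\<lambda>v'. coprod k l f w' v') v) w"
      unfolding H_def by (rule Hform[OF kl w v])
    also have "\<dots> = HC_res be (\<lambda>v'. coprod k l f w v') v"
      using w kl by (simp add: HC_res_triv[OF ta])
    finally show ?thesis .
  qed
  have inv: "HC_ind be (\<lambda>v. H (dg k l (conjm g w) v)) y = HC_ind be (\<lambda>v. H (dg k l w v)) y"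
    if w: "w \<in> carrier_mat k k" and g: "g \<in> GLn k" for w g y :: "'k mat"
  proof -
    have cw: "conjm g w \<in> carrier_mat k k" using conjm_carrier[OF g] .
    have "\<And>v. v \<in> carrier_mat l l \<Longrightarrow> H (dg k l (conjm g w) v) = H (dg k l w v)"
    proof -
      fix v :: "'k mat" assume v: "v \<in> carrier_mat l l"
      show "H (dg k l (conjm g w) v) = H (dg k l w v)" unfolding key[OF w v] key[OF cw v]
        by (rule fun_cong[OF HC_res_cong]) (use coprod_inv1[OF f g w] kl in simp)
    qed
    then show ?thesis by (intro fun_cong[OF HC_ind_cong]) (use kl in simp)
  qed
  have "hprod k l (\<lambda>x y. HC_ind be (HC_res be (\<lambda>y'. coprod k l f x y')) y) z
      = hprod k l (\<lambda>x y. HC_ind al (\<lambda>w. HC_ind be (\<lambda>v. H (dg k l w v)) y) x) z"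
  proof (rule hprod_cong)
    fix x y :: "'k mat" assume x: "x \<in> carrier_mat k k" and y: "y \<in> carrier_mat l l"
    have "HC_ind al (\<lambda>w. HC_ind be (\<lambda>v. H (dg k l w v)) y) x = HC_ind be (\<lambda>v. H (dg k l x v)) y"
      using HC_ind_triv_inv[OF ta kl(1), of "\<lambda>w. HC_ind be (\<lambda>v. H (dg k l w v)) y" x] inv x by simp
    also have "\<dots> = HC_ind be (HC_res be (\<lambda>y'. coprod k l f x y')) y"
      by (rule fun_cong[OF HC_ind_cong]) (use key[OF x] kl in simp)
    finally show "HC_ind be (HC_res be (\<lambda>y'. coprod k l f x y')) y = HC_ind al (\<lambda>w. HC_ind be (\<lambda>v. H (dg k l w v)) y) x" by simp
  qed
  also have "\<dots> = HC_ind (al @ be) H z" by (rule ind_trans[OF kl])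
  finally show ?thesis unfolding H_def .
qed



definition tb :: "nat \<Rightarrow> nat list" where "tb l = (if l = 0 then [] else [l])"

lemma tb_sum[simp]: "sum_list (tb l) = l" unfolding tb_def by simp
lemma tb_triv: "triv (tb l)" unfolding tb_def using triv_nil triv_single by simp

lemma comp_len: "lam \<in> compositions n \<Longrightarrow> length lam \<le> n"
proof -
  assume a: "lam \<in> compositions n"
  have "\<forall>x\<in>set lam. 0 < x" "sum_list lam = n" using a unfolding compositions_def by auto
  then show ?thesis
  proof (induction lam arbitrary: n)
    case Nil then show ?case by simp
  next
    case (Cons a lam)
    then have "length lam \<le> sum_list lam" by auto
    then show ?case using Cons.prems by auto
  qed
qed

lemma finite_compositions: "finite (compositions n)"
proof -
  have "compositions n \<subseteq> {xs. set xs \<subseteq> {0..n} \<and> length xs \<le> n}"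
  proof
    fix xs assume xs: "xs \<in> compositions n"
    have "set xs \<subseteq> {0..n}"
    proof
      fix x assume "x \<in> set xs"
      then have "x \<le> sum_list xs" by (rule member_le_sum_list) auto
      then show "x \<in> {0..n}" using xs unfolding compositions_def by auto
    qed
    then show "xs \<in> {xs. set xs \<subseteq> {0..n} \<and> length xs \<le> n}" using comp_len[OF xs] by auto
  qed
  moreover have "finite {xs. set xs \<subseteq> {0..n} \<and> length xs \<le> n}"
    by (rule finite_lists_length_le) simp
  ultimately show ?thesis by (rule finite_subset)
qed

lemma compositions_0: "compositions 0 = {[]}"
proof -
  have "xs = []" if "\<forall>x\<in>set xs. 0<x" "\<forall>n\<in>set xs. n = 0" for xs :: "nat list" using that by (cases xs) auto
  then show ?thesis unfolding compositions_def by (auto simp: sum_list_eq_0_iff)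
qed

lemma comp_nonempty: "0 < n \<Longrightarrow> lam \<in> compositions n \<Longrightarrow> lam \<noteq> []"
  unfolding compositions_def by auto

lemma CL: fixes Phi :: "nat list \<Rightarrow> complex"
  shows "(\<Sum>k\<in>{0..n}. \<Sum>al\<in>compositions k. (-1) ^ length al * Phi (al @ tb (n - k)))
    = (if n = 0 then Phi [] else 0)"
proof (cases "n = 0")
  case True
  then show ?thesis by (simp add: compositions_0 tb_def)
next
  case False
  then have n: "0 < n" by simp
  have split: "{0..n} = insert n {..<n}" by auto
  define m where "m = (\<lambda>p::nat \<times> nat list. snd p @ [n - fst p])"
  have inj: "inj_on m (Sigma {..<n} compositions)"
  proof (rule inj_onI)
    fix p q assume p: "p \<in> Sigma {..<n} compositions" and q: "q \<in> Sigma {..<n} compositions" and e: "m p = m q"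
    have "snd p = snd q" "n - fst p = n - fst q" using e unfolding m_def by auto
    moreover have "fst p < n" "fst q < n" using p q by auto
    ultimately have "fst p = fst q" by linarith
    then show "p = q" using \<open>snd p = snd q\<close> by (simp add: prod_eq_iff)
  qed
  have im: "m ` Sigma {..<n} compositions = compositions n"
  proof (rule Set.set_eqI, rule iffI)
    fix nu assume "nu \<in> m ` Sigma {..<n} compositions"
    then obtain k al where "k < n" "al \<in> compositions k" "nu = al @ [n - k]" unfolding m_def by auto
    then show "nu \<in> compositions n" unfolding compositions_def by auto
  next
    fix nu assume nu: "nu \<in> compositions n"
    have ne: "nu \<noteq> []" by (rule comp_nonempty[OF n nu])
    have pos: "0 < last nu" using nu ne unfolding compositions_def by auto
    have s0: "sum_list (butlast nu @ [last nu]) = n" using nu ne by (simp add: compositions_def)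
    have s: "sum_list (butlast nu) + last nu = n" using s0 by simp
    have "butlast nu \<in> compositions (n - last nu)" using nu s unfolding compositions_def
      by (auto dest: in_set_butlastD)
    moreover have "n - last nu < n" using pos s by simp
    moreover have "n - (n - last nu) = last nu" using s by simp
    then have "nu = m (n - last nu, butlast nu)" unfolding m_def using ne by simp
    ultimately show "nu \<in> m ` Sigma {..<n} compositions" by blast
  qed
  have "(\<Sum>k\<in>{..<n}. \<Sum>al\<in>compositions k. (-1) ^ length al * Phi (al @ tb (n - k)))
     = (\<Sum>p\<in>Sigma {..<n} compositions. (-1) ^ length (snd p) * Phi (m p))"
    unfolding m_def tb_def
    by (subst sum.Sigma) (auto simp: finite_compositions split_def intro!: sum.cong)
  also have "\<dots> = (\<Sum>p\<in>Sigma {..<n} compositions. - ((-1) ^ length (m p) * Phi (m p)))"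
    unfolding m_def by (intro sum.cong) auto
  also have "\<dots> = (\<Sum>nu\<in>compositions n. - ((-1) ^ length nu * Phi nu))"
    unfolding im[symmetric] sum.reindex[OF inj] by (simp add: comp_def)
  finally have A: "(\<Sum>k\<in>{..<n}. \<Sum>al\<in>compositions k. (-1) ^ length al * Phi (al @ tb (n - k)))
     = - (\<Sum>nu\<in>compositions n. (-1) ^ length nu * Phi nu)" by (simp add: sum_negf)
  show ?thesis unfolding split using A n by (simp add: tb_def)
qed

lemma CR: fixes Phi :: "nat list \<Rightarrow> complex"
  shows "(\<Sum>k\<in>{0..n}. \<Sum>be\<in>compositions (n - k). (-1) ^ length be * Phi (tb k @ be))
    = (if n = 0 then Phi [] else 0)"
proof (cases "n = 0")
  case True
  then show ?thesis by (simp add: compositions_0 tb_def)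
next
  case False
  then have n: "0 < n" by simp
  have split: "{0..n} = insert 0 {1..n}" by auto
  define m where "m = (\<lambda>p::nat \<times> nat list. fst p # snd p)"
  have inj: "inj_on m (Sigma {1..n} (\<lambda>k. compositions (n - k)))"
    unfolding m_def by (rule inj_onI) auto
  have im: "m ` Sigma {1..n} (\<lambda>k. compositions (n - k)) = compositions n"
  proof (rule Set.set_eqI, rule iffI)
    fix nu assume "nu \<in> m ` Sigma {1..n} (\<lambda>k. compositions (n - k))"
    then obtain k be where "1 \<le> k" "k \<le> n" "be \<in> compositions (n - k)" "nu = k # be" unfolding m_def by auto
    then show "nu \<in> compositions n" unfolding compositions_def by auto
  next
    fix nu assume nu: "nu \<in> compositions n"
    have ne: "nu \<noteq> []" by (rule comp_nonempty[OF n nu])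
    then obtain a be where nu': "nu = a # be" by (cases nu) auto
    have "0 < a" "a + sum_list be = n" "\<forall>x\<in>set be. 0 < x" using nu nu' unfolding compositions_def by auto
    then have "(a, be) \<in> Sigma {1..n} (\<lambda>k. compositions (n - k))" unfolding compositions_def by auto
    then show "nu \<in> m ` Sigma {1..n} (\<lambda>k. compositions (n - k))" unfolding m_def nu'
      by (intro image_eqI[of _ _ "(a, be)"]) auto
  qed
  have "(\<Sum>k\<in>{1..n}. \<Sum>be\<in>compositions (n - k). (-1) ^ length be * Phi (tb k @ be))
     = (\<Sum>p\<in>Sigma {1..n} (\<lambda>k. compositions (n - k)). (-1) ^ length (snd p) * Phi (m p))"
    unfolding m_def tb_def
    by (subst sum.Sigma) (auto simp: finite_compositions split_def intro!: sum.cong)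
  also have "\<dots> = (\<Sum>p\<in>Sigma {1..n} (\<lambda>k. compositions (n - k)). - ((-1) ^ length (m p) * Phi (m p)))"
    unfolding m_def by (intro sum.cong) auto
  also have "\<dots> = (\<Sum>nu\<in>compositions n. - ((-1) ^ length nu * Phi nu))"
    unfolding im[symmetric] sum.reindex[OF inj] by (simp add: comp_def)
  finally have A: "(\<Sum>k\<in>{1..n}. \<Sum>be\<in>compositions (n - k). (-1) ^ length be * Phi (tb k @ be))
     = - (\<Sum>nu\<in>compositions n. (-1) ^ length nu * Phi nu)" by (simp add: sum_negf)
  have "0 \<notin> {1..n}" by simp
  then show ?thesis unfolding split using A n by (simp add: tb_def)
qed


definition Dd :: "nat \<Rightarrow> ('k::{finite,field} mat \<Rightarrow> complex) \<Rightarrow> 'k mat \<Rightarrow> complex" where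
  "Dd n f x = (-1) ^ n * duality n f x"

lemma sign_lemma: "m \<le> k \<Longrightarrow> (-1::complex) ^ k * (-1) ^ (k - m) = (-1) ^ m"
proof -
  assume mk: "m \<le> k"
  then obtain j where kj: "k = m + j" using le_Suc_ex by blast
  have j1: "(-1::complex) ^ j * (-1) ^ j = 1" by (simp add: power_mult_distrib[symmetric])
  have "(-1::complex) ^ (m + j) * (-1) ^ j = (-1) ^ m * ((-1) ^ j * (-1) ^ j)"
    unfolding power_add by (rule mult.assoc)
  also have "\<dots> = (-1) ^ m" unfolding j1 by simp
  finally show ?thesis using kj by simp
qed

lemma D_formula: "Dd k q x = (\<Sum>al\<in>compositions k. (-1) ^ length al * HC_ind al (HC_res al q) x)"
proof -
  have "Dd k q x = (\<Sum>al\<in>compositions k. (-1) ^ k * ((-1) ^ (k - length al) * HC_ind al (HC_res al q) x))"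
    unfolding Dd_def duality_def by (simp add: sum_distrib_left)
  also have "\<dots> = (\<Sum>al\<in>compositions k. (-1) ^ length al * HC_ind al (HC_res al q) x)"
  proof (rule sum.cong[OF refl])
    fix al assume "al \<in> compositions k"
    then have "length al \<le> k" by (rule comp_len)
    then have e: "(-1::complex) ^ k * (-1) ^ (k - length al) = (-1) ^ length al" by (rule sign_lemma)
    have "(-1::complex) ^ k * ((-1) ^ (k - length al) * HC_ind al (HC_res al q) x)
       = ((-1) ^ k * (-1) ^ (k - length al)) * HC_ind al (HC_res al q) x" by (rule mult.assoc[symmetric])
    then show "(-1) ^ k * ((-1) ^ (k - length al) * HC_ind al (HC_res al q) x) = (-1) ^ length al * HC_ind al (HC_res al q) x"
      unfolding e .
  qed
  finally show ?thesis .
qed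

lemma hprod_lin: assumes "finite A"
  shows "hprod k l (\<lambda>x y. \<Sum>a\<in>A. c a * F a x y) z = (\<Sum>a\<in>A. c a * hprod k l (F a) z)"
proof (cases "z \<in> carrier_mat (k + l) (k + l)")
  case True
  let ?G = "{g \<in> GLn (k + l). conjm g z \<in> parLie [k, l]}"
  let ?X = "\<lambda>g. mat k k (\<lambda>(i, j). conjm g z $$ (i, j))"
  let ?Y = "\<lambda>g. mat l l (\<lambda>(i, j). conjm g z $$ (k + i, k + j))"
  have "(\<Sum>g\<in>?G. \<Sum>a\<in>A. c a * F a (?X g) (?Y g)) = (\<Sum>a\<in>A. \<Sum>g\<in>?G. c a * F a (?X g) (?Y g))"
    by (rule sum.swap)
  also have "\<dots> = (\<Sum>a\<in>A. c a * (\<Sum>g\<in>?G. F a (?X g) (?Y g)))" by (simp add: sum_distrib_left)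
  finally have e: "(\<Sum>g\<in>?G. \<Sum>a\<in>A. c a * F a (?X g) (?Y g)) = (\<Sum>a\<in>A. c a * (\<Sum>g\<in>?G. F a (?X g) (?Y g)))" .
  show ?thesis unfolding hprod_def using True e by (simp add: sum_distrib_left mult.left_commute)
next
  case False
  then show ?thesis unfolding hprod_def by simp
qed

lemma RI_triv: assumes tb: "triv be" and f: "f \<in> classfun (sum_list be)"
  shows "HC_ind be (HC_res be f) = f"
proof -
  have r: "HC_res be f = f"
    using f unfolding classfun_def by (auto simp: HC_res_triv[OF tb])
  show ?thesis unfolding r
  proof (rule ext)
    fix x show "HC_ind be f x = f x"
      using HC_ind_triv_inv[OF tb refl, of f x] f unfolding classfun_def by auto
  qed
qed

lemma term_left: assumes f: "f \<in> classfun n" and k: "k \<le> n"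
  shows "hprod k (n - k) (\<lambda>x y. Dd k (\<lambda>x'. coprod k (n - k) f x' y) x) (z::'k::{finite,field} mat)
    = (\<Sum>al\<in>compositions k. (-1) ^ length al * HC_ind (al @ tb (n - k)) (HC_res (al @ tb (n - k)) f) z)"
proof -
  have f': "f \<in> classfun (k + (n - k))" using f k by simp
  have "hprod k (n - k) (\<lambda>x y. Dd k (\<lambda>x'. coprod k (n - k) f x' y) x) z
     = (\<Sum>al\<in>compositions k. (-1) ^ length al * hprod k (n - k) (\<lambda>x y. HC_ind al (HC_res al (\<lambda>x'. coprod k (n - k) f x' y)) x) z)"
    unfolding D_formula by (rule hprod_lin[OF finite_compositions])
  also have "\<dots> = (\<Sum>al\<in>compositions k. (-1) ^ length al * HC_ind (al @ tb (n - k)) (HC_res (al @ tb (n - k)) f) z)"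
  proof (rule sum.cong[OF refl])
    fix al assume "al \<in> compositions k"
    then have s: "k = sum_list al" unfolding compositions_def by auto
    show "(-1) ^ length al * hprod k (n - k) (\<lambda>x y. HC_ind al (HC_res al (\<lambda>x'. coprod k (n - k) f x' y)) x) z
      = (-1) ^ length al * HC_ind (al @ tb (n - k)) (HC_res (al @ tb (n - k)) f) z"
      using Lh[OF f' s tb_sum[symmetric] tb_triv] by simp
  qed
  finally show ?thesis .
qed

lemma term_right: assumes f: "f \<in> classfun n" and k: "k \<le> n"
  shows "hprod k (n - k) (\<lambda>x y. Dd (n - k) (\<lambda>y'. coprod k (n - k) f x y') y) (z::'k::{finite,field} mat)
    = (\<Sum>be\<in>compositions (n - k). (-1) ^ length be * HC_ind (tb k @ be) (HC_res (tb k @ be) f) z)"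
proof -
  have f': "f \<in> classfun (k + (n - k))" using f k by simp
  have "hprod k (n - k) (\<lambda>x y. Dd (n - k) (\<lambda>y'. coprod k (n - k) f x y') y) z
     = (\<Sum>be\<in>compositions (n - k). (-1) ^ length be * hprod k (n - k) (\<lambda>x y. HC_ind be (HC_res be (\<lambda>y'. coprod k (n - k) f x y')) y) z)"
    unfolding D_formula by (rule hprod_lin[OF finite_compositions])
  also have "\<dots> = (\<Sum>be\<in>compositions (n - k). (-1) ^ length be * HC_ind (tb k @ be) (HC_res (tb k @ be) f) z)"
  proof (rule sum.cong[OF refl])
    fix be assume "be \<in> compositions (n - k)"
    then have s: "n - k = sum_list be" unfolding compositions_def by auto
    show "(-1) ^ length be * hprod k (n - k) (\<lambda>x y. HC_ind be (HC_res be (\<lambda>y'. coprod k (n - k) f x y')) y) z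
      = (-1) ^ length be * HC_ind (tb k @ be) (HC_res (tb k @ be) f) z"
      using Rh[OF f' tb_sum[symmetric] s tb_triv] by simp
  qed
  finally show ?thesis .
qed

lemma cond_left: assumes f: "(f::'k::{finite,field} mat \<Rightarrow> complex) \<in> classfun n"
  shows "(\<lambda>z. \<Sum>k\<in>{0..n}. hprod k (n - k) (\<lambda>x y. Dd k (\<lambda>x'. coprod k (n - k) f x' y) x) z)
     = (if n = 0 then f else (\<lambda>x. 0))"
proof (rule ext)
  fix z :: "'k mat"
  have "(\<Sum>k\<in>{0..n}. hprod k (n - k) (\<lambda>x y. Dd k (\<lambda>x'. coprod k (n - k) f x' y) x) z)
    = (\<Sum>k\<in>{0..n}. \<Sum>al\<in>compositions k. (-1) ^ length al * HC_ind (al @ tb (n - k)) (HC_res (al @ tb (n - k)) f) z)"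
    by (rule sum.cong[OF refl]) (use term_left[OF f] in auto)
  also have "\<dots> = (if n = 0 then HC_ind [] (HC_res [] f) z else 0)"
    by (rule CL)
  also have "\<dots> = (if n = 0 then f else (\<lambda>x. 0)) z"
    using RI_triv[OF triv_nil, of f] f by auto
  finally show "(\<Sum>k\<in>{0..n}. hprod k (n - k) (\<lambda>x y. Dd k (\<lambda>x'. coprod k (n - k) f x' y) x) z) = (if n = 0 then f else (\<lambda>x. 0)) z" .
qed

lemma cond_right: assumes f: "(f::'k::{finite,field} mat \<Rightarrow> complex) \<in> classfun n"
  shows "(\<lambda>z. \<Sum>k\<in>{0..n}. hprod k (n - k) (\<lambda>x y. Dd (n - k) (\<lambda>y'. coprod k (n - k) f x y') y) z)
     = (if n = 0 then f else (\<lambda>x. 0))"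
proof (rule ext)
  fix z :: "'k mat"
  have "(\<Sum>k\<in>{0..n}. hprod k (n - k) (\<lambda>x y. Dd (n - k) (\<lambda>y'. coprod k (n - k) f x y') y) z)
    = (\<Sum>k\<in>{0..n}. \<Sum>be\<in>compositions (n - k). (-1) ^ length be * HC_ind (tb k @ be) (HC_res (tb k @ be) f) z)"
    by (rule sum.cong[OF refl]) (use term_right[OF f] in auto)
  also have "\<dots> = (if n = 0 then HC_ind [] (HC_res [] f) z else 0)"
    by (rule CR)
  also have "\<dots> = (if n = 0 then f else (\<lambda>x. 0)) z"
    using RI_triv[OF triv_nil, of f] f by auto
  finally show "(\<Sum>k\<in>{0..n}. hprod k (n - k) (\<lambda>x y. Dd (n - k) (\<lambda>y'. coprod k (n - k) f x y') y) z) = (if n = 0 then f else (\<lambda>x. 0)) z" .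
qed


lemma HC_res_lin: "HC_res lam (\<lambda>x. a * f x + b * g x) = (\<lambda>x. a * HC_res lam f x + b * HC_res lam g x)"
  by (rule ext) (simp add: HC_res_def sum.distrib sum_distrib_left algebra_simps)

lemma HC_ind_lin: "HC_ind lam (\<lambda>x. a * f x + b * g x) = (\<lambda>x. a * HC_ind lam f x + b * HC_ind lam g x)"
  by (rule ext) (simp add: HC_ind_def sum.distrib sum_distrib_left algebra_simps)

lemma Dd_lin: "Dd n (\<lambda>x. a * f x + b * g x) = (\<lambda>x. a * Dd n f x + b * Dd n g x)"
proof (rule ext)
  fix x
  show "Dd n (\<lambda>x. a * f x + b * g x) x = a * Dd n f x + b * Dd n g x"
    unfolding D_formula HC_res_lin HC_ind_lin
    by (simp add: sum.distrib sum_distrib_left algebra_simps)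
qed

lemma Dd_classfun: "Dd n f \<in> classfun n"
proof -
  have c: "HC_ind al (HC_res al f) \<in> classfun n" if "al \<in> compositions n" for al
    using HC_ind_classfun[of al "HC_res al f"] that unfolding compositions_def by auto
  have e: "Dd n f = (\<lambda>x. \<Sum>al\<in>compositions n. (-1) ^ length al * HC_ind al (HC_res al f) x)"
    by (rule ext) (rule D_formula)
  show ?thesis unfolding e classfun_def
  proof (intro CollectI conjI allI impI ballI)
    fix x :: "'a mat" assume "x \<notin> carrier_mat n n"
    then show "(\<Sum>al\<in>compositions n. (-1) ^ length al * HC_ind al (HC_res al f) x) = 0"
      using c unfolding classfun_def by (intro sum.neutral) auto
  next
    fix x g :: "'a mat" assume x: "x \<in> carrier_mat n n" and g: "g \<in> GLn n"
    then show "(\<Sum>al\<in>compositions n. (-1) ^ length al * HC_ind al (HC_res al f) (conjm g x)) =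
               (\<Sum>al\<in>compositions n. (-1) ^ length al * HC_ind al (HC_res al f) x)"
      using c unfolding classfun_def by (intro sum.cong) auto
  qed
qed

lemma Dd_antipode: "is_antipode Dd"
  unfolding is_antipode_def using Dd_classfun Dd_lin cond_left cond_right by blast

lemma carrier_n0: "carrier_mat n 0 = {0\<^sub>m n 0 :: 'a::zero mat}"
  by (auto intro!: eq_matI)

lemma hprod_n0: assumes G: "G \<in> classfun n"
  shows "hprod n 0 (\<lambda>x y. G x) z = G (z::'k::{finite,field} mat)"
proof (cases "z \<in> carrier_mat n n")
  case True
  have pl: "parLie [n, 0] = (carrier_mat (n+0) (n+0) :: 'k mat set)"
  proof (rule Set.set_eqI, rule iffI)
    fix M :: "'k mat" assume "M \<in> parLie [n, 0]"
    then show "M \<in> carrier_mat (n+0) (n+0)" using parLie_carrier by fastforce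
  next
    fix M :: "'k mat" assume M: "M \<in> carrier_mat (n+0) (n+0)"
    have "llb n 0 M = 0\<^sub>m 0 n" by (rule eq_matI) auto
    then show "M \<in> parLie [n, 0]" using parLie_kl[OF M] by simp
  qed
  have pg: "parGrp [n, 0] = (GLn n :: 'k mat set)" unfolding parGrp_eq pl by (auto simp: GLn_def)
  have S: "{g \<in> GLn (n + 0). conjm g z \<in> parLie [n, 0]} = GLn n"
    unfolding pl using conjm_carrier by auto
  have m: "mat n n (\<lambda>(i, j). conjm g z $$ (i, j)) = conjm g z" if g: "g \<in> GLn n" for g
  proof -
    have c: "conjm g z \<in> carrier_mat n n" by (rule conjm_carrier[OF g])
    show ?thesis by (rule eq_matI) (use c in auto)
  qed
  have "(\<Sum>g\<in>GLn n. G (mat n n (\<lambda>(i, j). conjm g z $$ (i, j)))) = (\<Sum>g\<in>(GLn n :: 'k mat set). G z)"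
    using m G True unfolding classfun_def by (intro sum.cong) auto
  then show ?thesis unfolding hprod_def pg S using True card_GLn_pos[of n, where 'k='k] by simp
next
  case False
  then show ?thesis using G unfolding hprod_def classfun_def by simp
qed

lemma coprod_n0: assumes f: "f \<in> classfun n" and y: "(y::'k::{finite,field} mat) \<in> carrier_mat 0 0"
  shows "(\<lambda>x'. coprod n 0 f x' y) = f"
proof (rule ext)
  fix x' :: "'k mat"
  show "coprod n 0 f x' y = f x'"
  proof (cases "x' \<in> carrier_mat n n")
    case True
    have "four_block_mat x' (0\<^sub>m n 0) (0\<^sub>m 0 n) y = x'" using True y by (intro eq_matI) auto
    then show ?thesis unfolding coprod_formula[OF True y] carrier_n0 by simp
  next
    case False
    then show ?thesis using f unfolding coprod_def classfun_def by simp
  qed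
qed

lemma slice_classfun: assumes f: "f \<in> classfun (k + l)"
  shows "(\<lambda>x'. coprod k l f x' (y::'k::{finite,field} mat)) \<in> classfun k"
proof (cases "y \<in> carrier_mat l l")
  case True
  show ?thesis unfolding classfun_def
    using coprod_inv1[OF f _ _ True] by (auto simp: coprod_def)
next
  case False
  then show ?thesis unfolding classfun_def by (simp add: coprod_def)
qed

lemma uniq: assumes S: "is_antipode (S :: nat \<Rightarrow> ('k::{finite,field} mat \<Rightarrow> complex) \<Rightarrow> 'k mat \<Rightarrow> complex)"
  shows "\<forall>f\<in>classfun n. S n f = Dd n f"
proof (induction n rule: less_induct)
  case (less n)
  show ?case
  proof
    fix f :: "'k mat \<Rightarrow> complex" assume f: "f \<in> classfun n"
    have ES: "(\<lambda>z. \<Sum>k\<in>{0..n}. hprod k (n - k) (\<lambda>x y. S k (\<lambda>x'. coprod k (n - k) f x' y) x) z)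
       = (if n = 0 then f else (\<lambda>x. 0))" using S f unfolding is_antipode_def by blast
    have ED: "(\<lambda>z. \<Sum>k\<in>{0..n}. hprod k (n - k) (\<lambda>x y. Dd k (\<lambda>x'. coprod k (n - k) f x' y) x) z)
       = (if n = 0 then f else (\<lambda>x. 0))" by (rule cond_left[OF f])
    have lower: "(\<lambda>x y. S k (\<lambda>x'. coprod k (n - k) f x' y) x) = (\<lambda>x y. Dd k (\<lambda>x'. coprod k (n - k) f x' y) x)"
      if k: "k < n" for k
    proof (intro ext)
      fix x y :: "'k mat"
      have "f \<in> classfun (k + (n - k))" using f k by simp
      then have "(\<lambda>x'. coprod k (n - k) f x' y) \<in> classfun k" by (rule slice_classfun)
      then show "S k (\<lambda>x'. coprod k (n - k) f x' y) x = Dd k (\<lambda>x'. coprod k (n - k) f x' y) x"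
        using less.IH[OF k] by simp
    qed
    have SnC: "S n f \<in> classfun n" using S f unfolding is_antipode_def by blast
    have top: "hprod n (n - n) (\<lambda>x y. T n (\<lambda>x'. coprod n (n - n) f x' y) x) z = T n f z"
      if T: "T n f \<in> classfun n" for T :: "nat \<Rightarrow> ('k mat \<Rightarrow> complex) \<Rightarrow> 'k mat \<Rightarrow> complex" and z
    proof -
      have "hprod n 0 (\<lambda>x y. T n (\<lambda>x'. coprod n 0 f x' y) x) z = hprod n 0 (\<lambda>x y. T n f x) z"
        by (rule hprod_cong) (use coprod_n0[OF f] in simp)
      also have "\<dots> = T n f z" by (rule hprod_n0[OF T])
      finally show ?thesis by simp
    qed
    have split: "{0..n} = insert n {..<n}" by auto
    show "S n f = Dd n f"
    proof (rule ext)
      fix z :: "'k mat"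
      have "(\<Sum>k\<in>{0..n}. hprod k (n - k) (\<lambda>x y. S k (\<lambda>x'. coprod k (n - k) f x' y) x) z)
          = (\<Sum>k\<in>{0..n}. hprod k (n - k) (\<lambda>x y. Dd k (\<lambda>x'. coprod k (n - k) f x' y) x) z)"
        using fun_cong[OF ES, of z] fun_cong[OF ED, of z] by simp
      then have "hprod n (n - n) (\<lambda>x y. S n (\<lambda>x'. coprod n (n - n) f x' y) x) z
            + (\<Sum>k\<in>{..<n}. hprod k (n - k) (\<lambda>x y. S k (\<lambda>x'. coprod k (n - k) f x' y) x) z)
          = hprod n (n - n) (\<lambda>x y. Dd n (\<lambda>x'. coprod n (n - n) f x' y) x) z
            + (\<Sum>k\<in>{..<n}. hprod k (n - k) (\<lambda>x y. Dd k (\<lambda>x'. coprod k (n - k) f x' y) x) z)"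
        unfolding split by simp
      moreover have "(\<Sum>k\<in>{..<n}. hprod k (n - k) (\<lambda>x y. S k (\<lambda>x'. coprod k (n - k) f x' y) x) z)
          = (\<Sum>k\<in>{..<n}. hprod k (n - k) (\<lambda>x y. Dd k (\<lambda>x'. coprod k (n - k) f x' y) x) z)"
        using lower by (intro sum.cong) auto
      ultimately have "hprod n (n - n) (\<lambda>x y. S n (\<lambda>x'. coprod n (n - n) f x' y) x) z
          = hprod n (n - n) (\<lambda>x y. Dd n (\<lambda>x'. coprod n (n - n) f x' y) x) z" by simp
      then show "S n f z = Dd n f z" using top[of S z, OF SnC] top[of Dd z, OF Dd_classfun] by simp
    qed
  qed
qed

theorem mainTheorem8:
  fixes D :: "nat \<Rightarrow> ('k::{finite,field} mat \<Rightarrow> complex) \<Rightarrow> 'k mat \<Rightarrow> complex"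
  defines "D \<equiv> (\<lambda>n f x. (-1) ^ n * duality n f x)"
  shows "is_antipode D \<and>
         (\<forall>S. is_antipode S \<longrightarrow> (\<forall>n. \<forall>f\<in>classfun n. S n f = D n f))"
proof -
  have DD: "D = Dd" unfolding D_def by (intro ext) (simp add: Dd_def)
  show ?thesis unfolding DD using Dd_antipode uniq by blast
qed

end
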